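(* Let $T$ and $A$ be as in the context, and suppose $(ATA)^{-1}$ is Lipschitz continuous at zero. Let $\{(x_k,w_k)\}$ be an infinite sequence generated by the IPHA. Then $\{(x_k,w_k)\}$ converges linearly (to a solution of the SVI in extensive form) in the norm $\|(x,w)\|_{M_r}=\sqrt{\|x\|^2+r^{-2}\|w\|^2}$.
   Context: Multistage setting: $\Xi$ is a finite set of scenarios $\xi=(\xi_1,\dots,\xi_N)$ with probabilities $p(\xi)>0$; $n=n_1+\dots+n_N$. $\mathcal L_n$ is the space of functions $x:\Xi\to\mathbb R^n$, $x(\xi)=(x_1(\xi),\dots,x_N(\xi))$, $x_j(\xi)\in\mathbb R^{n_j}$, with inner product $\langle x,w\rangle=\sum_{\xi}p(\xi)\sum_{j}\langle x_j(\xi),w_j(\xi)\rangle$ and norm $\|\cdot\|$. $\mathcal N=\{x\in\mathcal L_n: x_j(\xi)\text{ does not depend on }\xi_j,\dots,\xi_N\}$, $\mathcal M=\mathcal N^\perp$, with orthogonal projections $P_{\mathcal N},P_{\mathcal M}$. For each $\xi$, $C(\xi)\subset\mathbb R^n$ is nonempty closed convex and $F(\cdot,\xi):\mathbb R^n\to\mathbb R^n$ is continuous monotone; $\mathcal C=\{x\in\mathcal L_n: x(\xi)\in C(\xi)\ \forall\xi\}$ and $\mathcal F(x)(\xi)=F(x(\xi),\xi)$. $r>0$ fixed. SVI in extensive form: find $x\in\mathcal N$, $w\in\mathcal M$ with $-F(x(\xi),\xi)-w(\xi)\in N_{C(\xi)}(x(\xi))$ for all $\xi$. $T:\mathcal L_n\rightrightarrows\mathcal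 L_n$ is defined by $z\in T(y)\iff P_{\mathcal N}(z)+P_{\mathcal M}(y)\in(\mathcal F+N_{\mathcal C})(P_{\mathcal N}(y)+P_{\mathcal M}(z))$, and $A(u)=P_{\mathcal N}(u)+rP_{\mathcal M}(u)$. A set-valued map $S$ with $S^{-1}=(ATA)^{-1}$ is Lipschitz continuous at zero if $S(0)=\{z^*\}$ is a singleton and there are $L,\eta>0$ with $\|z-z^*\|\le L\|v\|$ whenever $z\in S(v)$, $\|v\|\le\eta$. IPHA: choose $x_0\in\mathcal N$, $w_0\in\mathcal M$, $\bar\sigma\in(0,1)$, $\theta\in(0,1)$. At iteration $k$: choose $\sigma_k\in[0,\bar\sigma)$, find $\hat x^k,\hat w^k\in\mathcal L_n$ with $r(x_k(\xi)-\hat x^k(\xi))-w_k(\xi)\in F(\hat w^k(\xi),\xi)+N_{C(\xi)}(\hat w^k(\xi))$ for all $\xi$, $\delta^k=\hat w^k-\hat x^k$, and $\|\delta^k\|^2\le\sigma_k^2(\|a_k\|^2+\|b_k\|^2)$, where $a_k=x_k-P_{\mathcal N}(\hat x^k)+P_{\mathcal M}(\hat w^k)$, $b_k=x_k-P_{\mathcal N}(\hat w^k)+P_{\mathcal M}(\hat x^k)$. If $b_k=0$ stop; otherwise choose $\tau_k\in[1-\theta,1+\theta]$, set $\alpha_k=\langle a_k,b_k\rangle/\|a_k\|^2$, $x_{k+1}=x_k-\tau_k\alpha_k(x_k-P_{\mathcal N}(\hat x^k))$, $w_{k+1}=w_k+\tau_k\alpha_k rP_{\mathcal M}(\hat w^k)$.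 *)

theory Defs
  imports "HOL-Analysis.Analysis"
begin

text \<open>Scenarios are functions xi :: nat => 'e, the stage-i component being xi i
  (i = 1..N). Decisions live in real^'n; each coordinate k belongs to the stage
  block stg k in {1..N} (so n = n_1 + ... + n_N). Elements of L_n are functions
  from scenarios to real^'n which vanish outside the scenario set Xi.\<close>

type_synonym ('e, 'n) Lfun = "(nat \<Rightarrow> 'e) \<Rightarrow> real^'n"

definition ip :: "(nat \<Rightarrow> 'e) set \<Rightarrow> ((nat \<Rightarrow> 'e) \<Rightarrow> real) \<Rightarrow> ('e,'n::finite) Lfun \<Rightarrow> ('e,'n::finite) Lfun \<Rightarrow> real" where
  "ip Xi p x w = (\<Sum>\<xi>\<in>Xi. p \<xi> * (x \<xi> \<bullet> w \<xi>))"

definition Lnorm :: "(nat \<Rightarrow> 'e) set \<Rightarrow> ((nat \<Rightarrow> 'e) \<Rightarrow> real) \<Rightarrow> ('e,'n::finite) Lfun \<Rightarrow> real" where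
  "Lnorm Xi p x = sqrt (ip Xi p x x)"

definition Lsp :: "(nat \<Rightarrow> 'e) set \<Rightarrow> ('e,'n::finite) Lfun set" where
  "Lsp Xi = {x. \<forall>\<xi>. \<xi> \<notin> Xi \<longrightarrow> x \<xi> = 0}"

definition NAsp :: "(nat \<Rightarrow> 'e) set \<Rightarrow> ('n \<Rightarrow> nat) \<Rightarrow> ('e,'n::finite) Lfun set" where
  "NAsp Xi stg = {x \<in> Lsp Xi. \<forall>\<xi>\<in>Xi. \<forall>\<xi>'\<in>Xi. \<forall>k.
      (\<forall>i. 1 \<le> i \<and> i < stg k \<longrightarrow> \<xi> i = \<xi>' i) \<longrightarrow> x \<xi> $ k = x \<xi>' $ k}"

definition Msp :: "(nat \<Rightarrow> 'e) set \<Rightarrow> ((nat \<Rightarrow> 'e) \<Rightarrow> real) \<Rightarrow> ('n \<Rightarrow> nat) \<Rightarrow> ('e,'n::finite) Lfun set" where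
  "Msp Xi p stg = {w \<in> Lsp Xi. \<forall>x\<in>NAsp Xi stg. ip Xi p x w = 0}"

definition oproj :: "(nat \<Rightarrow> 'e) set \<Rightarrow> ((nat \<Rightarrow> 'e) \<Rightarrow> real) \<Rightarrow> ('e,'n::finite) Lfun set \<Rightarrow> ('e,'n::finite) Lfun \<Rightarrow> ('e,'n::finite) Lfun" where
  "oproj Xi p S x = (THE y. y \<in> S \<and> (\<forall>z\<in>S. ip Xi p (\<lambda>\<xi>. x \<xi> - y \<xi>) z = 0))"

definition PN where "PN Xi p stg = oproj Xi p (NAsp Xi stg)"
definition PM where "PM Xi p stg = oproj Xi p (Msp Xi p stg)"

definition ncone :: "(real^'n::finite) set \<Rightarrow> real^'n \<Rightarrow> (real^'n) set" where
  "ncone C u = {v. u \<in> C \<and> (\<forall>c\<in>C. v \<bullet> (c - u) \<le> 0)}"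

definition Ccal :: "(nat \<Rightarrow> 'e) set \<Rightarrow> ((nat \<Rightarrow> 'e) \<Rightarrow> (real^'n::finite) set) \<Rightarrow> ('e,'n::finite) Lfun set" where
  "Ccal Xi C = {x \<in> Lsp Xi. \<forall>\<xi>\<in>Xi. x \<xi> \<in> C \<xi>}"

definition LNcone :: "(nat \<Rightarrow> 'e) set \<Rightarrow> ((nat \<Rightarrow> 'e) \<Rightarrow> real) \<Rightarrow> ('e,'n::finite) Lfun set \<Rightarrow> ('e,'n::finite) Lfun \<Rightarrow> ('e,'n::finite) Lfun set" where
  "LNcone Xi p S u = {v \<in> Lsp Xi. u \<in> S \<and> (\<forall>x\<in>S. ip Xi p v (\<lambda>\<xi>. x \<xi> - u \<xi>) \<le> 0)}"

definition Fcal :: "(nat \<Rightarrow> 'e) set \<Rightarrow> (real^'n \<Rightarrow> (nat \<Rightarrow> 'e) \<Rightarrow> real^'n::finite) \<Rightarrow> ('e,'n::finite) Lfun \<Rightarrow> ('e,'n::finite) Lfun" where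
  "Fcal Xi F x = (\<lambda>\<xi>. if \<xi> \<in> Xi then F (x \<xi>) \<xi> else 0)"

definition Top :: "(nat \<Rightarrow> 'e) set \<Rightarrow> ((nat \<Rightarrow> 'e) \<Rightarrow> real) \<Rightarrow> ('n \<Rightarrow> nat)
    \<Rightarrow> (real^'n \<Rightarrow> (nat \<Rightarrow> 'e) \<Rightarrow> real^'n::finite) \<Rightarrow> ((nat \<Rightarrow> 'e) \<Rightarrow> (real^'n) set)
    \<Rightarrow> ('e,'n::finite) Lfun \<Rightarrow> ('e,'n::finite) Lfun set" where
  "Top Xi p stg F C y = {z \<in> Lsp Xi.
     (let u = (\<lambda>\<xi>. PN Xi p stg y \<xi> + PM Xi p stg z \<xi>) in
      (\<exists>v \<in> LNcone Xi p (Ccal Xi C) u.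
         (\<lambda>\<xi>. PN Xi p stg z \<xi> + PM Xi p stg y \<xi>) = (\<lambda>\<xi>. Fcal Xi F u \<xi> + v \<xi>)))}"

definition Aop :: "(nat \<Rightarrow> 'e) set \<Rightarrow> ((nat \<Rightarrow> 'e) \<Rightarrow> real) \<Rightarrow> ('n \<Rightarrow> nat) \<Rightarrow> real
    \<Rightarrow> ('e,'n::finite) Lfun \<Rightarrow> ('e,'n::finite) Lfun" where
  "Aop Xi p stg r u = (\<lambda>\<xi>. PN Xi p stg u \<xi> + r *\<^sub>R PM Xi p stg u \<xi>)"

definition ATAinv :: "(nat \<Rightarrow> 'e) set \<Rightarrow> ((nat \<Rightarrow> 'e) \<Rightarrow> real) \<Rightarrow> ('n \<Rightarrow> nat) \<Rightarrow> real
    \<Rightarrow> (real^'n \<Rightarrow> (nat \<Rightarrow> 'e) \<Rightarrow> real^'n::finite) \<Rightarrow> ((nat \<Rightarrow> 'e) \<Rightarrow> (real^'n) set)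
    \<Rightarrow> ('e,'n::finite) Lfun \<Rightarrow> ('e,'n::finite) Lfun set" where
  "ATAinv Xi p stg r F C v =
     {z \<in> Lsp Xi. \<exists>y \<in> Top Xi p stg F C (Aop Xi p stg r z). v = Aop Xi p stg r y}"

definition lipschitz_at_zero :: "(nat \<Rightarrow> 'e) set \<Rightarrow> ((nat \<Rightarrow> 'e) \<Rightarrow> real)
    \<Rightarrow> (('e,'n::finite) Lfun \<Rightarrow> ('e,'n::finite) Lfun set) \<Rightarrow> bool" where
  "lipschitz_at_zero Xi p S \<longleftrightarrow> (\<exists>zs. S (\<lambda>_. 0) = {zs} \<and>
     (\<exists>L>0. \<exists>\<eta>>0. \<forall>v z. v \<in> Lsp Xi \<and> z \<in> S v \<and> Lnorm Xi p v \<le> \<eta> \<longrightarrow>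
        Lnorm Xi p (\<lambda>\<xi>. z \<xi> - zs \<xi>) \<le> L * Lnorm Xi p v))"

definition svi_solution where
  "svi_solution Xi p stg F C xs ws \<longleftrightarrow> xs \<in> NAsp Xi stg \<and> ws \<in> Msp Xi p stg \<and>
     (\<forall>\<xi>\<in>Xi. - F (xs \<xi>) \<xi> - ws \<xi> \<in> ncone (C \<xi>) (xs \<xi>))"

definition ipha_run :: "(nat \<Rightarrow> 'e) set \<Rightarrow> ((nat \<Rightarrow> 'e) \<Rightarrow> real) \<Rightarrow> ('n \<Rightarrow> nat) \<Rightarrow> real
    \<Rightarrow> (real^'n \<Rightarrow> (nat \<Rightarrow> 'e) \<Rightarrow> real^'n::finite) \<Rightarrow> ((nat \<Rightarrow> 'e) \<Rightarrow> (real^'n) set)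
    \<Rightarrow> real \<Rightarrow> real \<Rightarrow> (nat \<Rightarrow> real) \<Rightarrow> (nat \<Rightarrow> real)
    \<Rightarrow> (nat \<Rightarrow> ('e,'n::finite) Lfun) \<Rightarrow> (nat \<Rightarrow> ('e,'n::finite) Lfun)
    \<Rightarrow> (nat \<Rightarrow> ('e,'n::finite) Lfun) \<Rightarrow> (nat \<Rightarrow> ('e,'n::finite) Lfun) \<Rightarrow> bool" where
  "ipha_run Xi p stg r F C sbar \<theta> \<sigma> \<tau> x w xh wh \<longleftrightarrow>
     x 0 \<in> NAsp Xi stg \<and> w 0 \<in> Msp Xi p stg \<and> 0 < sbar \<and> sbar < 1 \<and> 0 < \<theta> \<and> \<theta> < 1 \<and>
     (\<forall>k. 0 \<le> \<sigma> k \<and> \<sigma> k < sbar \<and> xh k \<in> Lsp Xi \<and> wh k \<in> Lsp Xi \<and>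
        (\<forall>\<xi>\<in>Xi. \<exists>v \<in> ncone (C \<xi>) (wh k \<xi>).
            r *\<^sub>R (x k \<xi> - xh k \<xi>) - w k \<xi> = F (wh k \<xi>) \<xi> + v) \<and>
        (let \<delta> = (\<lambda>\<xi>. wh k \<xi> - xh k \<xi>);
             a = (\<lambda>\<xi>. x k \<xi> - PN Xi p stg (xh k) \<xi> + PM Xi p stg (wh k) \<xi>);
             b = (\<lambda>\<xi>. x k \<xi> - PN Xi p stg (wh k) \<xi> + PM Xi p stg (xh k) \<xi>);
             \<alpha> = ip Xi p a b / (Lnorm Xi p a)\<^sup>2
         in (Lnorm Xi p \<delta>)\<^sup>2 \<le> (\<sigma> k)\<^sup>2 * ((Lnorm Xi p a)\<^sup>2 + (Lnorm Xi p b)\<^sup>2) \<and>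
            b \<noteq> (\<lambda>_. 0) \<and>
            1 - \<theta> \<le> \<tau> k \<and> \<tau> k \<le> 1 + \<theta> \<and>
            x (Suc k) = (\<lambda>\<xi>. x k \<xi> - (\<tau> k * \<alpha>) *\<^sub>R (x k \<xi> - PN Xi p stg (xh k) \<xi>)) \<and>
            w (Suc k) = (\<lambda>\<xi>. w k \<xi> + (\<tau> k * \<alpha> * r) *\<^sub>R PM Xi p stg (wh k) \<xi>)))"

definition Mr_norm where
  "Mr_norm Xi p r x w = sqrt ((Lnorm Xi p x)\<^sup>2 + (Lnorm Xi p w)\<^sup>2 / r\<^sup>2)"

end

theory Submission
  imports Defs
begin

lemma ip_sym: "ip Xi p x y = ip Xi p y x"
  unfolding ip_def by (simp add: inner_commute)

lemma ip_cong: "(\<And>\<xi>. \<xi> \<in> Xi \<Longrightarrow> x \<xi> = x' \<xi>) \<Longrightarrow> (\<And>\<xi>. \<xi> \<in> Xi \<Longrightarrow> y \<xi> = y' \<xi>) \<Longrightarrow> ip Xi p x y = ip Xi p x' y'"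
  unfolding ip_def by (intro sum.cong) auto

lemma ip_add_left: "ip Xi p (\<lambda>\<xi>. x \<xi> + y \<xi>) z = ip Xi p x z + ip Xi p y z"
  unfolding ip_def by (simp add: inner_add_left distrib_left sum.distrib)
lemma ip_diff_left: "ip Xi p (\<lambda>\<xi>. x \<xi> - y \<xi>) z = ip Xi p x z - ip Xi p y z"
  unfolding ip_def by (simp add: inner_diff_left right_diff_distrib sum_subtractf)
lemma ip_scale_left: "ip Xi p (\<lambda>\<xi>. c *\<^sub>R x \<xi>) z = c * ip Xi p x z"
  unfolding ip_def by (simp add: sum_distrib_left algebra_simps)
lemma ip_add_right: "ip Xi p z (\<lambda>\<xi>. x \<xi> + y \<xi>) = ip Xi p z x + ip Xi p z y"
  unfolding ip_def by (simp add: inner_add_right distrib_left sum.distrib)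
lemma ip_diff_right: "ip Xi p z (\<lambda>\<xi>. x \<xi> - y \<xi>) = ip Xi p z x - ip Xi p z y"
  unfolding ip_def by (simp add: inner_diff_right right_diff_distrib sum_subtractf)
lemma ip_scale_right: "ip Xi p z (\<lambda>\<xi>. c *\<^sub>R x \<xi>) = c * ip Xi p z x"
  unfolding ip_def by (simp add: sum_distrib_left algebra_simps)
lemma ip_zero_left: "ip Xi p (\<lambda>_. 0) z = 0" unfolding ip_def by simp
lemma ip_zero_right: "ip Xi p z (\<lambda>_. 0) = 0" unfolding ip_def by simp

lemmas ip_lin = ip_add_left ip_diff_left ip_scale_left ip_add_right ip_diff_right ip_scale_right
  ip_zero_left ip_zero_right

lemma ip_self_nonneg: "\<forall>\<xi>\<in>Xi. p \<xi> > 0 \<Longrightarrow> ip Xi p x x \<ge> 0"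
  unfolding ip_def by (intro sum_nonneg) auto

lemma Lnorm_sq: "\<forall>\<xi>\<in>Xi. p \<xi> > 0 \<Longrightarrow> (Lnorm Xi p x)\<^sup>2 = ip Xi p x x"
  unfolding Lnorm_def using ip_self_nonneg by simp

lemma ip_self_zero:
  assumes "finite Xi" "\<forall>\<xi>\<in>Xi. p \<xi> > 0" "ip Xi p x x = 0" "\<xi> \<in> Xi"
  shows "x \<xi> = 0"
proof -
  have "\<forall>\<xi>\<in>Xi. p \<xi> * (x \<xi> \<bullet> x \<xi>) = 0"
    using assms(3) unfolding ip_def
    by (subst sum_nonneg_eq_0_iff[symmetric]) (use assms(1,2) in auto)
  then show ?thesis using assms(2,4) by fastforce
qed

lemma ip_self_zero_Lsp:
  assumes "finite Xi" "\<forall>\<xi>\<in>Xi. p \<xi> > 0" "ip Xi p x x = 0" "x \<in> Lsp Xi"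
  shows "x = (\<lambda>_. 0)"
  using ip_self_zero[OF assms(1-3)] assms(4) unfolding Lsp_def by auto

lemma NAsp_Lsp: "x \<in> NAsp Xi stg \<Longrightarrow> x \<in> Lsp Xi" unfolding NAsp_def by auto
lemma Msp_Lsp: "x \<in> Msp Xi p stg \<Longrightarrow> x \<in> Lsp Xi" unfolding Msp_def by auto
lemma Lsp_out: "x \<in> Lsp Xi \<Longrightarrow> \<xi> \<notin> Xi \<Longrightarrow> x \<xi> = 0" unfolding Lsp_def by auto

lemma NAsp_lin: "x \<in> NAsp Xi stg \<Longrightarrow> y \<in> NAsp Xi stg \<Longrightarrow> (\<lambda>\<xi>. a *\<^sub>R x \<xi> + b *\<^sub>R y \<xi>) \<in> NAsp Xi stg"
proof -
  assume x: "x \<in> NAsp Xi stg" and y: "y \<in> NAsp Xi stg"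
  show ?thesis unfolding NAsp_def Lsp_def mem_Collect_eq
  proof (intro conjI ballI allI impI)
    fix \<xi> assume "\<xi> \<notin> Xi" then show "a *\<^sub>R x \<xi> + b *\<^sub>R y \<xi> = 0"
      using x y unfolding NAsp_def Lsp_def by simp
  next
    fix \<xi> \<xi>' k assume h: "\<xi> \<in> Xi" "\<xi>' \<in> Xi" "\<forall>i. 1 \<le> i \<and> i < stg k \<longrightarrow> \<xi> i = \<xi>' i"
    have "x \<xi> $ k = x \<xi>' $ k" "y \<xi> $ k = y \<xi>' $ k"
      using x y h unfolding NAsp_def by blast+
    then show "(a *\<^sub>R x \<xi> + b *\<^sub>R y \<xi>) $ k = (a *\<^sub>R x \<xi>' + b *\<^sub>R y \<xi>') $ k" by simp
  qed
qed
lemma NAsp_zero: "(\<lambda>_. 0) \<in> NAsp Xi stg"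
  unfolding NAsp_def Lsp_def by auto

lemma Msp_lin: "x \<in> Msp Xi p stg \<Longrightarrow> y \<in> Msp Xi p stg \<Longrightarrow> (\<lambda>\<xi>. a *\<^sub>R x \<xi> + b *\<^sub>R y \<xi>) \<in> Msp Xi p stg"
  unfolding Msp_def Lsp_def by (simp add: ip_add_right ip_scale_right)
lemma Msp_zero: "(\<lambda>_. 0) \<in> Msp Xi p stg"
  unfolding Msp_def Lsp_def by (simp add: ip_zero_right)

lemma NM_orth: "x \<in> NAsp Xi stg \<Longrightarrow> y \<in> Msp Xi p stg \<Longrightarrow> ip Xi p x y = 0"
  unfolding Msp_def by auto

lemma oproj_unique:
  assumes fin: "finite Xi" and pos: "\<forall>\<xi>\<in>Xi. p \<xi> > 0"
    and S: "S \<subseteq> Lsp Xi" "\<And>u v. u \<in> S \<Longrightarrow> v \<in> S \<Longrightarrow> (\<lambda>\<xi>. u \<xi> - v \<xi>) \<in> S"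
    and y: "y \<in> S" "\<forall>z\<in>S. ip Xi p (\<lambda>\<xi>. x \<xi> - y \<xi>) z = 0"
  shows "oproj Xi p S x = y"
  unfolding oproj_def
proof (rule the_equality)
  show "y \<in> S \<and> (\<forall>z\<in>S. ip Xi p (\<lambda>\<xi>. x \<xi> - y \<xi>) z = 0)" using y by auto
next
  fix y' assume h: "y' \<in> S \<and> (\<forall>z\<in>S. ip Xi p (\<lambda>\<xi>. x \<xi> - y' \<xi>) z = 0)"
  define d where "d = (\<lambda>\<xi>. y' \<xi> - y \<xi>)"
  have dS: "d \<in> S" unfolding d_def using S h y by auto
  have "ip Xi p d d = ip Xi p (\<lambda>\<xi>. x \<xi> - y \<xi>) d - ip Xi p (\<lambda>\<xi>. x \<xi> - y' \<xi>) d"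
    unfolding d_def by (simp add: ip_lin)
  also have "\<dots> = 0" using h y dS by auto
  finally have "d = (\<lambda>_. 0)" using ip_self_zero_Lsp[OF fin pos] dS S by auto
  then show "y' = y" unfolding d_def by (auto simp: fun_eq_iff)
qed

definition eqv :: "('n \<Rightarrow> nat) \<Rightarrow> 'n \<Rightarrow> (nat \<Rightarrow> 'e) \<Rightarrow> (nat \<Rightarrow> 'e) \<Rightarrow> bool" where
  "eqv stg k \<xi> \<xi>' \<longleftrightarrow> (\<forall>i. 1 \<le> i \<and> i < stg k \<longrightarrow> \<xi> i = \<xi>' i)"

definition Wt :: "(nat \<Rightarrow> 'e) set \<Rightarrow> ((nat \<Rightarrow> 'e) \<Rightarrow> real) \<Rightarrow> ('n \<Rightarrow> nat) \<Rightarrow> 'n \<Rightarrow> (nat \<Rightarrow> 'e) \<Rightarrow> real" where "Wt Xi p stg k \<xi> = (\<Sum>\<xi>'\<in>Xi. if eqv stg k \<xi> \<xi>' then p \<xi>' else 0)"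
definition St :: "(nat \<Rightarrow> 'e) set \<Rightarrow> ((nat \<Rightarrow> 'e) \<Rightarrow> real) \<Rightarrow> ('n::finite \<Rightarrow> nat) \<Rightarrow> 'n \<Rightarrow> ('e,'n) Lfun \<Rightarrow> (nat \<Rightarrow> 'e) \<Rightarrow> real" where "St Xi p stg k x \<xi> = (\<Sum>\<xi>'\<in>Xi. if eqv stg k \<xi> \<xi>' then p \<xi>' * x \<xi>' $ k else 0)"

definition Ecnd :: "(nat \<Rightarrow> 'e) set \<Rightarrow> ((nat \<Rightarrow> 'e) \<Rightarrow> real) \<Rightarrow> ('n \<Rightarrow> nat) \<Rightarrow> ('e,'n::finite) Lfun \<Rightarrow> ('e,'n::finite) Lfun" where
  "Ecnd Xi p stg x = (\<lambda>\<xi>. if \<xi> \<in> Xi then (\<chi> k. St Xi p stg k x \<xi> / Wt Xi p stg k \<xi>) else 0)"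

lemma eqv_sym: "eqv stg k a b \<Longrightarrow> eqv stg k b a" unfolding eqv_def by auto
lemma eqv_trans: "eqv stg k a b \<Longrightarrow> eqv stg k b c \<Longrightarrow> eqv stg k a c" unfolding eqv_def by auto
lemma eqv_refl: "eqv stg k a a" unfolding eqv_def by auto

lemma Wt_eqv: "eqv stg k a b \<Longrightarrow> Wt Xi p stg k a = Wt Xi p stg k b"
  unfolding Wt_def by (intro sum.cong) (auto dest: eqv_sym eqv_trans)
lemma St_eqv: "eqv stg k a b \<Longrightarrow> St Xi p stg k x a = St Xi p stg k x b"
  unfolding St_def by (intro sum.cong) (auto dest: eqv_sym eqv_trans)

lemma Wt_pos: assumes "finite Xi" "\<forall>\<xi>\<in>Xi. p \<xi> > 0" "\<xi> \<in> Xi" shows "Wt Xi p stg k \<xi> > 0"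
proof -
  have "(if eqv stg k \<xi> \<xi> then p \<xi> else 0) \<le> Wt Xi p stg k \<xi>"
    unfolding Wt_def by (rule member_le_sum) (use assms in \<open>auto simp: less_imp_le\<close>)
  moreover have "p \<xi> > 0" using assms by auto
  ultimately show ?thesis by (simp add: eqv_refl)
qed

lemma Ecnd_NAsp: "Ecnd Xi p stg x \<in> NAsp Xi stg"
  unfolding NAsp_def Lsp_def mem_Collect_eq
proof (intro conjI ballI allI impI)
  fix \<xi> assume "\<xi> \<notin> Xi" then show "Ecnd Xi p stg x \<xi> = 0" unfolding Ecnd_def by simp
next
  fix \<xi> \<xi>' k assume h: "\<xi> \<in> Xi" "\<xi>' \<in> Xi" "\<forall>i. 1 \<le> i \<and> i < stg k \<longrightarrow> \<xi> i = \<xi>' i"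
  then have e: "eqv stg k \<xi> \<xi>'" unfolding eqv_def by auto
  show "Ecnd Xi p stg x \<xi> $ k = Ecnd Xi p stg x \<xi>' $ k"
    using h unfolding Ecnd_def by (simp add: Wt_eqv[OF e] St_eqv[OF e])
qed

lemma Ecnd_orth_k:
  assumes fin: "finite Xi" and pos: "\<forall>\<xi>\<in>Xi. p \<xi> > 0" and z: "z \<in> NAsp Xi stg"
  shows "(\<Sum>\<xi>\<in>Xi. p \<xi> * (St Xi p stg k x \<xi> / Wt Xi p stg k \<xi>) * z \<xi> $ k)
       = (\<Sum>\<xi>\<in>Xi. p \<xi> * x \<xi> $ k * z \<xi> $ k)"
proof -
  let ?W = "Wt Xi p stg k"
  have zk: "z \<xi> $ k = z \<xi>' $ k" if "\<xi> \<in> Xi" "\<xi>' \<in> Xi" "eqv stg k \<xi> \<xi>'" for \<xi> \<xi>'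
    using z that unfolding NAsp_def eqv_def by blast
  have "(\<Sum>\<xi>\<in>Xi. p \<xi> * (St Xi p stg k x \<xi> / ?W \<xi>) * z \<xi> $ k)
     = (\<Sum>\<xi>\<in>Xi. \<Sum>\<xi>'\<in>Xi. if eqv stg k \<xi> \<xi>' then p \<xi> * p \<xi>' * x \<xi>' $ k * z \<xi>' $ k / ?W \<xi>' else 0)"
  proof (rule sum.cong[OF refl])
    fix \<xi> assume x: "\<xi> \<in> Xi"
    have "p \<xi> * (St Xi p stg k x \<xi> / ?W \<xi>) * z \<xi> $ k
       = (\<Sum>\<xi>'\<in>Xi. (if eqv stg k \<xi> \<xi>' then p \<xi>' * x \<xi>' $ k else 0) * (p \<xi> * z \<xi> $ k / ?W \<xi>))"
      unfolding St_def sum_distrib_right[symmetric] by simp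
    also have "\<dots> = (\<Sum>\<xi>'\<in>Xi. if eqv stg k \<xi> \<xi>' then p \<xi> * p \<xi>' * x \<xi>' $ k * z \<xi>' $ k / ?W \<xi>' else 0)"
      by (intro sum.cong refl) (auto simp: zk[OF x] Wt_eqv)
    finally show "p \<xi> * (St Xi p stg k x \<xi> / ?W \<xi>) * z \<xi> $ k
       = (\<Sum>\<xi>'\<in>Xi. if eqv stg k \<xi> \<xi>' then p \<xi> * p \<xi>' * x \<xi>' $ k * z \<xi>' $ k / ?W \<xi>' else 0)" .
  qed
  also have "\<dots> = (\<Sum>\<xi>'\<in>Xi. \<Sum>\<xi>\<in>Xi. if eqv stg k \<xi> \<xi>' then p \<xi> * p \<xi>' * x \<xi>' $ k * z \<xi>' $ k / ?W \<xi>' else 0)"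
    by (rule sum.swap)
  also have "\<dots> = (\<Sum>\<xi>'\<in>Xi. p \<xi>' * x \<xi>' $ k * z \<xi>' $ k)"
  proof (rule sum.cong[OF refl])
    fix \<xi>' assume x': "\<xi>' \<in> Xi"
    have "(\<Sum>\<xi>\<in>Xi. if eqv stg k \<xi> \<xi>' then p \<xi> * p \<xi>' * x \<xi>' $ k * z \<xi>' $ k / ?W \<xi>' else 0)
        = (\<Sum>\<xi>\<in>Xi. (if eqv stg k \<xi>' \<xi> then p \<xi> else 0)) * (p \<xi>' * x \<xi>' $ k * z \<xi>' $ k / ?W \<xi>')"
      unfolding sum_distrib_right by (intro sum.cong refl) (auto dest: eqv_sym)
    also have "\<dots> = ?W \<xi>' * (p \<xi>' * x \<xi>' $ k * z \<xi>' $ k / ?W \<xi>')" unfolding Wt_def by simp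
    also have "\<dots> = p \<xi>' * x \<xi>' $ k * z \<xi>' $ k"
    proof -
      have "?W \<xi>' \<noteq> 0" using Wt_pos[OF fin pos x', of stg k] by linarith
      then show ?thesis by simp
    qed
    finally show "(\<Sum>\<xi>\<in>Xi. if eqv stg k \<xi> \<xi>' then p \<xi> * p \<xi>' * x \<xi>' $ k * z \<xi>' $ k / ?W \<xi>' else 0)
        = p \<xi>' * x \<xi>' $ k * z \<xi>' $ k" .
  qed
  finally show ?thesis .
qed

lemma Ecnd_orth:
  assumes fin: "finite Xi" and pos: "\<forall>\<xi>\<in>Xi. p \<xi> > 0" and z: "z \<in> NAsp Xi stg"
  shows "ip Xi p (\<lambda>\<xi>. x \<xi> - Ecnd Xi p stg x \<xi>) z = 0"
proof -
  have "ip Xi p (\<lambda>\<xi>. x \<xi> - Ecnd Xi p stg x \<xi>) z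
     = (\<Sum>k\<in>UNIV. (\<Sum>\<xi>\<in>Xi. p \<xi> * x \<xi> $ k * z \<xi> $ k) - (\<Sum>\<xi>\<in>Xi. p \<xi> * (St Xi p stg k x \<xi> / Wt Xi p stg k \<xi>) * z \<xi> $ k))"
    unfolding ip_def
  proof -
    have "(\<Sum>\<xi>\<in>Xi. p \<xi> * ((x \<xi> - Ecnd Xi p stg x \<xi>) \<bullet> z \<xi>))
       = (\<Sum>\<xi>\<in>Xi. \<Sum>k\<in>UNIV. p \<xi> * x \<xi> $ k * z \<xi> $ k - p \<xi> * (St Xi p stg k x \<xi> / Wt Xi p stg k \<xi>) * z \<xi> $ k)"
      by (intro sum.cong refl) (simp add: inner_vec_def sum_distrib_left Ecnd_def algebra_simps)
    also have "\<dots> = (\<Sum>k\<in>UNIV. \<Sum>\<xi>\<in>Xi. p \<xi> * x \<xi> $ k * z \<xi> $ k - p \<xi> * (St Xi p stg k x \<xi> / Wt Xi p stg k \<xi>) * z \<xi> $ k)"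
      by (rule sum.swap)
    finally show "(\<Sum>\<xi>\<in>Xi. p \<xi> * ((x \<xi> - Ecnd Xi p stg x \<xi>) \<bullet> z \<xi>)) = (\<Sum>k\<in>UNIV.
       (\<Sum>\<xi>\<in>Xi. p \<xi> * x \<xi> $ k * z \<xi> $ k) - (\<Sum>\<xi>\<in>Xi. p \<xi> * (St Xi p stg k x \<xi> / Wt Xi p stg k \<xi>) * z \<xi> $ k))"
      by (simp add: sum_subtractf)
  qed
  also have "\<dots> = 0" using Ecnd_orth_k[OF fin pos z] by simp
  finally show ?thesis .
qed

lemma NAsp_diff: "u \<in> NAsp Xi stg \<Longrightarrow> v \<in> NAsp Xi stg \<Longrightarrow> (\<lambda>\<xi>. u \<xi> - v \<xi>) \<in> NAsp Xi stg"
  using NAsp_lin[of u Xi stg v 1 "-1"] by simp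
lemma Msp_diff: "u \<in> Msp Xi p stg \<Longrightarrow> v \<in> Msp Xi p stg \<Longrightarrow> (\<lambda>\<xi>. u \<xi> - v \<xi>) \<in> Msp Xi p stg"
  using Msp_lin[of u Xi p stg v 1 "-1"] by simp
lemma NAsp_sub_Lsp: "NAsp Xi stg \<subseteq> Lsp Xi" using NAsp_Lsp by auto
lemma Msp_sub_Lsp: "Msp Xi p stg \<subseteq> Lsp Xi" using Msp_Lsp by auto

context
  fixes Xi :: "(nat \<Rightarrow> 'e) set" and p :: "(nat \<Rightarrow> 'e) \<Rightarrow> real" and stg :: "'n::finite \<Rightarrow> nat"
  assumes fin: "finite Xi" and pos: "\<forall>\<xi>\<in>Xi. p \<xi> > 0"
begin

lemma PN_unique:
  assumes "y \<in> NAsp Xi stg" "\<forall>z\<in>NAsp Xi stg. ip Xi p (\<lambda>\<xi>. x \<xi> - y \<xi>) z = 0"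
  shows "PN Xi p stg x = y"
  unfolding PN_def by (rule oproj_unique[OF fin pos NAsp_sub_Lsp NAsp_diff assms])

lemma PN_char: "PN Xi p stg x = Ecnd Xi p stg x"
  by (rule PN_unique) (auto simp: Ecnd_NAsp Ecnd_orth[OF fin pos])

lemma PN_in: "PN Xi p stg x \<in> NAsp Xi stg"
  by (simp add: PN_char Ecnd_NAsp)

lemma PN_orth: "z \<in> NAsp Xi stg \<Longrightarrow> ip Xi p (\<lambda>\<xi>. x \<xi> - PN Xi p stg x \<xi>) z = 0"
  by (simp add: PN_char Ecnd_orth[OF fin pos])

lemma PN_Lsp: "PN Xi p stg x \<in> Lsp Xi" using PN_in NAsp_Lsp by blast

lemma PM_eq: "PM Xi p stg x = (\<lambda>\<xi>. if \<xi> \<in> Xi then x \<xi> - PN Xi p stg x \<xi> else 0)"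
  unfolding PM_def
proof (rule oproj_unique[OF fin pos Msp_sub_Lsp Msp_diff])
  let ?y = "(\<lambda>\<xi>. if \<xi> \<in> Xi then x \<xi> - PN Xi p stg x \<xi> else 0)"
  have "ip Xi p z ?y = ip Xi p (\<lambda>\<xi>. x \<xi> - PN Xi p stg x \<xi>) z" for z
    by (subst ip_sym) (rule ip_cong, auto)
  then show "?y \<in> Msp Xi p stg" unfolding Msp_def Lsp_def using PN_orth by auto
  show "\<forall>z\<in>Msp Xi p stg. ip Xi p (\<lambda>\<xi>. x \<xi> - ?y \<xi>) z = 0"
  proof
    fix z assume z: "z \<in> Msp Xi p stg"
    have "ip Xi p (\<lambda>\<xi>. x \<xi> - ?y \<xi>) z = ip Xi p (PN Xi p stg x) z" by (rule ip_cong) auto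
    also have "\<dots> = 0" using NM_orth[OF PN_in z] .
    finally show "ip Xi p (\<lambda>\<xi>. x \<xi> - ?y \<xi>) z = 0" .
  qed
qed

lemma PM_in: "PM Xi p stg x \<in> Msp Xi p stg"
proof -
  let ?y = "(\<lambda>\<xi>. if \<xi> \<in> Xi then x \<xi> - PN Xi p stg x \<xi> else 0)"
  have "ip Xi p z ?y = ip Xi p (\<lambda>\<xi>. x \<xi> - PN Xi p stg x \<xi>) z" for z
    by (subst ip_sym) (rule ip_cong, auto)
  then show ?thesis unfolding PM_eq unfolding Msp_def Lsp_def using PN_orth by auto
qed

lemma PM_Lsp: "PM Xi p stg x \<in> Lsp Xi" using PM_in Msp_Lsp by blast

lemma decomp: "x \<in> Lsp Xi \<Longrightarrow> PN Xi p stg x \<xi> + PM Xi p stg x \<xi> = x \<xi>"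
  unfolding PM_eq using PN_Lsp[of x] by (auto simp: Lsp_def)

lemma PN_lin: "PN Xi p stg (\<lambda>\<xi>. a *\<^sub>R x \<xi> + b *\<^sub>R y \<xi>) = (\<lambda>\<xi>. a *\<^sub>R PN Xi p stg x \<xi> + b *\<^sub>R PN Xi p stg y \<xi>)"
proof (rule PN_unique)
  show "(\<lambda>\<xi>. a *\<^sub>R PN Xi p stg x \<xi> + b *\<^sub>R PN Xi p stg y \<xi>) \<in> NAsp Xi stg"
    by (rule NAsp_lin[OF PN_in PN_in])
  show "\<forall>z\<in>NAsp Xi stg. ip Xi p (\<lambda>\<xi>. a *\<^sub>R x \<xi> + b *\<^sub>R y \<xi> - (a *\<^sub>R PN Xi p stg x \<xi> + b *\<^sub>R PN Xi p stg y \<xi>)) z = 0"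
  proof
    fix z assume z: "z \<in> NAsp Xi stg"
    have "ip Xi p (\<lambda>\<xi>. a *\<^sub>R x \<xi> + b *\<^sub>R y \<xi> - (a *\<^sub>R PN Xi p stg x \<xi> + b *\<^sub>R PN Xi p stg y \<xi>)) z
      = ip Xi p (\<lambda>\<xi>. a *\<^sub>R (x \<xi> - PN Xi p stg x \<xi>) + b *\<^sub>R (y \<xi> - PN Xi p stg y \<xi>)) z"
      by (simp add: algebra_simps)
    also have "\<dots> = a * ip Xi p (\<lambda>\<xi>. x \<xi> - PN Xi p stg x \<xi>) z + b * ip Xi p (\<lambda>\<xi>. y \<xi> - PN Xi p stg y \<xi>) z"
      by (simp only: ip_add_left ip_scale_left)
    also have "\<dots> = 0" using PN_orth[OF z] by simp
    finally show "ip Xi p (\<lambda>\<xi>. a *\<^sub>R x \<xi> + b *\<^sub>R y \<xi> - (a *\<^sub>R PN Xi p stg x \<xi> + b *\<^sub>R PN Xi p stg y \<xi>)) z = 0" .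
  qed
qed

lemma PM_lin: "PM Xi p stg (\<lambda>\<xi>. a *\<^sub>R x \<xi> + b *\<^sub>R y \<xi>) = (\<lambda>\<xi>. a *\<^sub>R PM Xi p stg x \<xi> + b *\<^sub>R PM Xi p stg y \<xi>)"
  unfolding PM_eq[of "(\<lambda>\<xi>. a *\<^sub>R x \<xi> + b *\<^sub>R y \<xi>)"] PM_eq[of x] PM_eq[of y] PN_lin
  by (auto simp: fun_eq_iff algebra_simps)

lemma PN_N: "x \<in> NAsp Xi stg \<Longrightarrow> PN Xi p stg x = x"
  by (rule PN_unique) (auto simp: ip_zero_left)

lemma PN_M: "x \<in> Msp Xi p stg \<Longrightarrow> PN Xi p stg x = (\<lambda>_. 0)"
  by (rule PN_unique) (auto simp: NAsp_zero ip_sym[of Xi p x] NM_orth)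

lemma PM_N: assumes "x \<in> NAsp Xi stg" shows "PM Xi p stg x = (\<lambda>_. 0)"
  unfolding PM_eq PN_N[OF assms] by (auto simp: fun_eq_iff)

lemma PM_M: "x \<in> Msp Xi p stg \<Longrightarrow> PM Xi p stg x = x"
  unfolding PM_eq using Msp_Lsp[of x] by (auto simp: PN_M fun_eq_iff Lsp_def)

lemma ip_NM:
  assumes "n1 \<in> NAsp Xi stg" "n2 \<in> NAsp Xi stg" "m1 \<in> Msp Xi p stg" "m2 \<in> Msp Xi p stg"
  shows "ip Xi p (\<lambda>\<xi>. n1 \<xi> + m1 \<xi>) (\<lambda>\<xi>. n2 \<xi> + m2 \<xi>) = ip Xi p n1 n2 + ip Xi p m1 m2"
proof -
  have "ip Xi p n1 m2 = 0" "ip Xi p m1 n2 = 0"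
    using NM_orth assms ip_sym[of Xi p m1 n2] by auto
  then show ?thesis by (simp add: ip_add_left ip_add_right)
qed

end

lemma NAsp_scale: "x \<in> NAsp Xi stg \<Longrightarrow> (\<lambda>\<xi>. c *\<^sub>R x \<xi>) \<in> NAsp Xi stg"
  using NAsp_lin[of x Xi stg x c 0] by simp
lemma Msp_scale: "x \<in> Msp Xi p stg \<Longrightarrow> (\<lambda>\<xi>. c *\<^sub>R x \<xi>) \<in> Msp Xi p stg"
  using Msp_lin[of x Xi p stg x c 0] by simp
lemma NAsp_add: "u \<in> NAsp Xi stg \<Longrightarrow> v \<in> NAsp Xi stg \<Longrightarrow> (\<lambda>\<xi>. u \<xi> + v \<xi>) \<in> NAsp Xi stg"
  using NAsp_lin[of u Xi stg v 1 1] by simp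
lemma Msp_add: "u \<in> Msp Xi p stg \<Longrightarrow> v \<in> Msp Xi p stg \<Longrightarrow> (\<lambda>\<xi>. u \<xi> + v \<xi>) \<in> Msp Xi p stg"
  using Msp_lin[of u Xi p stg v 1 1] by simp

lemma Lsp_lin: "x \<in> Lsp Xi \<Longrightarrow> y \<in> Lsp Xi \<Longrightarrow> (\<lambda>\<xi>. a *\<^sub>R x \<xi> + b *\<^sub>R y \<xi>) \<in> Lsp Xi"
  unfolding Lsp_def by auto

lemma ip_par: "ip Xi p (\<lambda>\<xi>. u \<xi> + v \<xi>) (\<lambda>\<xi>. u \<xi> + v \<xi>) + ip Xi p (\<lambda>\<xi>. u \<xi> - v \<xi>) (\<lambda>\<xi>. u \<xi> - v \<xi>)
   = 2 * ip Xi p u u + 2 * ip Xi p v v"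
  by (simp add: ip_lin ip_sym[of Xi p v u])

lemma ip_par_le: "\<forall>\<xi>\<in>Xi. p \<xi> > 0 \<Longrightarrow> ip Xi p (\<lambda>\<xi>. u \<xi> + v \<xi>) (\<lambda>\<xi>. u \<xi> + v \<xi>) \<le> 2 * ip Xi p u u + 2 * ip Xi p v v"
  using ip_par[of Xi p u v] ip_self_nonneg[of Xi p "\<lambda>\<xi>. u \<xi> - v \<xi>"] by linarith

lemma LNcone_pointwise:
  assumes fin: "finite Xi" and pos: "\<forall>\<xi>\<in>Xi. p \<xi> > 0" and V: "V \<in> LNcone Xi p (Ccal Xi C) u" and xi: "\<xi> \<in> Xi"
  shows "V \<xi> \<in> ncone (C \<xi>) (u \<xi>)"
proof -
  have uC: "u \<in> Ccal Xi C" using V unfolding LNcone_def by auto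
  then have "u \<xi> \<in> C \<xi>" using xi unfolding Ccal_def by auto
  moreover have "V \<xi> \<bullet> (c - u \<xi>) \<le> 0" if c: "c \<in> C \<xi>" for c
  proof -
    let ?x = "u(\<xi> := c)"
    have "?x \<in> Ccal Xi C" using uC c xi unfolding Ccal_def Lsp_def by auto
    then have "ip Xi p V (\<lambda>\<eta>. ?x \<eta> - u \<eta>) \<le> 0" using V unfolding LNcone_def by auto
    moreover have "ip Xi p V (\<lambda>\<eta>. ?x \<eta> - u \<eta>) = (\<Sum>\<eta>\<in>Xi. if \<eta> = \<xi> then p \<xi> * (V \<xi> \<bullet> (c - u \<xi>)) else 0)"
      unfolding ip_def by (intro sum.cong) auto
    moreover have "\<dots> = p \<xi> * (V \<xi> \<bullet> (c - u \<xi>))" using fin xi by simp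
    ultimately have "p \<xi> * (V \<xi> \<bullet> (c - u \<xi>)) \<le> 0" by linarith
    moreover have "p \<xi> > 0" using pos xi by auto
    ultimately show ?thesis by (simp add: mult_le_0_iff)
  qed
  ultimately show ?thesis unfolding ncone_def by auto
qed

lemma LNcone_of_pointwise:
  assumes pos: "\<forall>\<xi>\<in>Xi. p \<xi> > 0" and VL: "V \<in> Lsp Xi" and uL: "u \<in> Lsp Xi"
    and pw: "\<forall>\<xi>\<in>Xi. V \<xi> \<in> ncone (C \<xi>) (u \<xi>)"
  shows "V \<in> LNcone Xi p (Ccal Xi C) u"
proof -
  have "u \<in> Ccal Xi C" using uL pw unfolding Ccal_def ncone_def by auto
  moreover have "ip Xi p V (\<lambda>\<xi>. x \<xi> - u \<xi>) \<le> 0" if x: "x \<in> Ccal Xi C" for x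
    unfolding ip_def
  proof (rule sum_nonpos)
    fix \<xi> assume xi: "\<xi> \<in> Xi"
    have "V \<xi> \<bullet> (x \<xi> - u \<xi>) \<le> 0" using pw x xi unfolding ncone_def Ccal_def by auto
    then show "p \<xi> * (V \<xi> \<bullet> (x \<xi> - u \<xi>)) \<le> 0" using pos xi by (simp add: mult_nonneg_nonpos less_imp_le)
  qed
  ultimately show ?thesis unfolding LNcone_def using VL by auto
qed

context
  fixes Xi :: "(nat \<Rightarrow> 'e) set" and p :: "(nat \<Rightarrow> 'e) \<Rightarrow> real" and stg :: "'n::finite \<Rightarrow> nat"
  assumes fin: "finite Xi" and pos: "\<forall>\<xi>\<in>Xi. p \<xi> > 0"
begin

lemma split_PN:
  assumes n: "n \<in> NAsp Xi stg" and m: "m \<in> Msp Xi p stg" and x: "x = (\<lambda>\<xi>. n \<xi> + m \<xi>)"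
  shows "PN Xi p stg x = n"
proof (rule PN_unique[OF fin pos n])
  show "\<forall>z\<in>NAsp Xi stg. ip Xi p (\<lambda>\<xi>. x \<xi> - n \<xi>) z = 0"
    using NM_orth[of _ Xi stg m p] m ip_sym[of Xi p m] x by simp
qed

lemma split_PM:
  assumes n: "n \<in> NAsp Xi stg" and m: "m \<in> Msp Xi p stg" and x: "x = (\<lambda>\<xi>. n \<xi> + m \<xi>)"
  shows "PM Xi p stg x = m"
  unfolding PM_eq[OF fin pos] split_PN[OF n m x] using Msp_Lsp[OF m] x
  by (auto simp: fun_eq_iff Lsp_def)

end

lemma sol_from_zero:
  fixes Xi :: "(nat \<Rightarrow> 'e) set" and p :: "(nat \<Rightarrow> 'e) \<Rightarrow> real" and stg :: "'n::finite \<Rightarrow> nat"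
  assumes fin: "finite Xi" and pos: "\<forall>\<xi>\<in>Xi. p \<xi> > 0" and r: "r > 0"
    and zs: "zs \<in> ATAinv Xi p stg r F C (\<lambda>_. 0)"
  shows "svi_solution Xi p stg F C (PN Xi p stg zs) (\<lambda>\<xi>. (-r) *\<^sub>R PM Xi p stg zs \<xi>)"
proof -
  obtain y where zsL: "zs \<in> Lsp Xi" and y: "y \<in> Top Xi p stg F C (Aop Xi p stg r zs)"
    and y0: "(\<lambda>_. 0) = Aop Xi p stg r y"
    using zs unfolding ATAinv_def by auto
  have z0: "PN Xi p stg (\<lambda>_. 0) = (\<lambda>_. 0)" "PM Xi p stg (\<lambda>_. 0) = (\<lambda>_. 0)"
    using PN_N[OF fin pos NAsp_zero] PM_M[OF fin pos Msp_zero] by auto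
  have ysplit: "Aop Xi p stg r y = (\<lambda>\<xi>. PN Xi p stg y \<xi> + (\<lambda>\<xi>. r *\<^sub>R PM Xi p stg y \<xi>) \<xi>)"
    unfolding Aop_def by simp
  have PNy: "PN Xi p stg y = (\<lambda>_. 0)"
    using split_PN[OF fin pos PN_in[OF fin pos] Msp_scale[OF PM_in[OF fin pos]] ysplit] y0 z0 by simp
  have "(\<lambda>\<xi>. r *\<^sub>R PM Xi p stg y \<xi>) = (\<lambda>_. 0)"
    using split_PM[OF fin pos PN_in[OF fin pos] Msp_scale[OF PM_in[OF fin pos]] ysplit] y0 z0 by simp
  then have PMy: "PM Xi p stg y = (\<lambda>_. 0)" using r by (auto simp: fun_eq_iff)
  have Ysplit: "Aop Xi p stg r zs = (\<lambda>\<xi>. PN Xi p stg zs \<xi> + (\<lambda>\<xi>. r *\<^sub>R PM Xi p stg zs \<xi>) \<xi>)"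
    unfolding Aop_def by simp
  have PNY: "PN Xi p stg (Aop Xi p stg r zs) = PN Xi p stg zs"
    by (rule split_PN[OF fin pos PN_in[OF fin pos] Msp_scale[OF PM_in[OF fin pos]] Ysplit])
  have PMY: "PM Xi p stg (Aop Xi p stg r zs) = (\<lambda>\<xi>. r *\<^sub>R PM Xi p stg zs \<xi>)"
    by (rule split_PM[OF fin pos PN_in[OF fin pos] Msp_scale[OF PM_in[OF fin pos]] Ysplit])
  have ueq: "(\<lambda>\<xi>. PN Xi p stg (Aop Xi p stg r zs) \<xi> + PM Xi p stg y \<xi>) = PN Xi p stg zs"
    by (simp add: PNY PMy)
  obtain V where V0: "V \<in> LNcone Xi p (Ccal Xi C) (\<lambda>\<xi>. PN Xi p stg (Aop Xi p stg r zs) \<xi> + PM Xi p stg y \<xi>)"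
    and eq0: "(\<lambda>\<xi>. PN Xi p stg y \<xi> + PM Xi p stg (Aop Xi p stg r zs) \<xi>) = (\<lambda>\<xi>. Fcal Xi F (\<lambda>\<xi>. PN Xi p stg (Aop Xi p stg r zs) \<xi> + PM Xi p stg y \<xi>) \<xi> + V \<xi>)"
    using y unfolding Top_def Let_def by blast
  have V: "V \<in> LNcone Xi p (Ccal Xi C) (PN Xi p stg zs)" using V0 ueq by simp
  have eq: "(\<lambda>\<xi>. PN Xi p stg y \<xi> + PM Xi p stg (Aop Xi p stg r zs) \<xi>) = (\<lambda>\<xi>. Fcal Xi F (PN Xi p stg zs) \<xi> + V \<xi>)"
    using eq0 ueq by simp
  have "- F (PN Xi p stg zs \<xi>) \<xi> - (-r) *\<^sub>R PM Xi p stg zs \<xi> \<in> ncone (C \<xi>) (PN Xi p stg zs \<xi>)"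
    if xi: "\<xi> \<in> Xi" for \<xi>
  proof -
    have "r *\<^sub>R PM Xi p stg zs \<xi> = F (PN Xi p stg zs \<xi>) \<xi> + V \<xi>"
      using fun_cong[OF eq, of \<xi>] xi unfolding PNy PMY Fcal_def by simp
    then have "- F (PN Xi p stg zs \<xi>) \<xi> - (-r) *\<^sub>R PM Xi p stg zs \<xi> = V \<xi>" by (simp add: algebra_simps)
    then show ?thesis using LNcone_pointwise[OF fin pos V xi] by simp
  qed
  moreover have "(\<lambda>\<xi>. (-r) *\<^sub>R PM Xi p stg zs \<xi>) \<in> Msp Xi p stg"
    by (rule Msp_scale[OF PM_in[OF fin pos]])
  ultimately show ?thesis unfolding svi_solution_def
    using PN_in[OF fin pos] by blast
qed

locale ipha =
  fixes Xi :: "(nat \<Rightarrow> 'e) set" and p :: "(nat \<Rightarrow> 'e) \<Rightarrow> real" and stg :: "'n::finite \<Rightarrow> nat"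
    and r :: real and F :: "real^'n \<Rightarrow> (nat \<Rightarrow> 'e) \<Rightarrow> real^'n" and C :: "(nat \<Rightarrow> 'e) \<Rightarrow> (real^'n) set"
    and sbar \<theta> :: real and \<sigma> \<tau> :: "nat \<Rightarrow> real"
    and x w xh wh :: "nat \<Rightarrow> (nat \<Rightarrow> 'e) \<Rightarrow> real^'n"
  assumes fin: "finite Xi" and pos: "\<forall>\<xi>\<in>Xi. p \<xi> > 0" and rpos: "r > 0"
    and mono: "\<forall>\<xi>\<in>Xi. \<forall>u v. (F u \<xi> - F v \<xi>) \<bullet> (u - v) \<ge> 0"
    and run: "ipha_run Xi p stg r F C sbar \<theta> \<sigma> \<tau> x w xh wh"
begin

abbreviation "AA k \<equiv> (\<lambda>\<xi>. x k \<xi> - PN Xi p stg (xh k) \<xi> + PM Xi p stg (wh k) \<xi>)"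
abbreviation "BB k \<equiv> (\<lambda>\<xi>. x k \<xi> - PN Xi p stg (wh k) \<xi> + PM Xi p stg (xh k) \<xi>)"
abbreviation "al k \<equiv> ip Xi p (AA k) (BB k) / (Lnorm Xi p (AA k))\<^sup>2"

lemma run0: "x 0 \<in> NAsp Xi stg" "w 0 \<in> Msp Xi p stg" "0 < sbar" "sbar < 1" "0 < \<theta>" "\<theta> < 1"
  using run unfolding ipha_run_def by auto

lemma runk_all: "0 \<le> \<sigma> k \<and> \<sigma> k < sbar \<and> xh k \<in> Lsp Xi \<and> wh k \<in> Lsp Xi \<and>
        (\<forall>\<xi>\<in>Xi. \<exists>v \<in> ncone (C \<xi>) (wh k \<xi>).
            r *\<^sub>R (x k \<xi> - xh k \<xi>) - w k \<xi> = F (wh k \<xi>) \<xi> + v) \<and>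
        (Lnorm Xi p (\<lambda>\<xi>. wh k \<xi> - xh k \<xi>))\<^sup>2 \<le> (\<sigma> k)\<^sup>2 * ((Lnorm Xi p (AA k))\<^sup>2 + (Lnorm Xi p (BB k))\<^sup>2) \<and>
  BB k \<noteq> (\<lambda>_. 0) \<and> 1 - \<theta> \<le> \<tau> k \<and> \<tau> k \<le> 1 + \<theta> \<and>
  x (Suc k) = (\<lambda>\<xi>. x k \<xi> - (\<tau> k * al k) *\<^sub>R (x k \<xi> - PN Xi p stg (xh k) \<xi>)) \<and>
  w (Suc k) = (\<lambda>\<xi>. w k \<xi> + (\<tau> k * al k * r) *\<^sub>R PM Xi p stg (wh k) \<xi>)"
proof -
  have "\<forall>k. 0 \<le> \<sigma> k \<and> \<sigma> k < sbar \<and> xh k \<in> Lsp Xi \<and> wh k \<in> Lsp Xi \<and>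
        (\<forall>\<xi>\<in>Xi. \<exists>v \<in> ncone (C \<xi>) (wh k \<xi>).
            r *\<^sub>R (x k \<xi> - xh k \<xi>) - w k \<xi> = F (wh k \<xi>) \<xi> + v) \<and>
        (let \<delta> = (\<lambda>\<xi>. wh k \<xi> - xh k \<xi>);
             a = (\<lambda>\<xi>. x k \<xi> - PN Xi p stg (xh k) \<xi> + PM Xi p stg (wh k) \<xi>);
             b = (\<lambda>\<xi>. x k \<xi> - PN Xi p stg (wh k) \<xi> + PM Xi p stg (xh k) \<xi>);
             \<alpha> = ip Xi p a b / (Lnorm Xi p a)\<^sup>2
         in (Lnorm Xi p \<delta>)\<^sup>2 \<le> (\<sigma> k)\<^sup>2 * ((Lnorm Xi p a)\<^sup>2 + (Lnorm Xi p b)\<^sup>2) \<and>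
            b \<noteq> (\<lambda>_. 0) \<and>
            1 - \<theta> \<le> \<tau> k \<and> \<tau> k \<le> 1 + \<theta> \<and>
            x (Suc k) = (\<lambda>\<xi>. x k \<xi> - (\<tau> k * \<alpha>) *\<^sub>R (x k \<xi> - PN Xi p stg (xh k) \<xi>)) \<and>
            w (Suc k) = (\<lambda>\<xi>. w k \<xi> + (\<tau> k * \<alpha> * r) *\<^sub>R PM Xi p stg (wh k) \<xi>))"
    using run unfolding ipha_run_def by (elim conjE)
  then show ?thesis
    unfolding Let_def by (rule spec)
qed

lemma runk1: "0 \<le> \<sigma> k" using runk_all[of k] by (elim conjE) assumption
lemma runk2: "\<sigma> k < sbar" using runk_all[of k] by (elim conjE) assumption
lemma runk3: "xh k \<in> Lsp Xi" using runk_all[of k] by (elim conjE) assumption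
lemma runk4: "wh k \<in> Lsp Xi" using runk_all[of k] by (elim conjE) assumption
lemma runk5: "\<forall>\<xi>\<in>Xi. \<exists>v \<in> ncone (C \<xi>) (wh k \<xi>). r *\<^sub>R (x k \<xi> - xh k \<xi>) - w k \<xi> = F (wh k \<xi>) \<xi> + v" using runk_all[of k] by (elim conjE) assumption
lemma runk6: "(Lnorm Xi p (\<lambda>\<xi>. wh k \<xi> - xh k \<xi>))\<^sup>2 \<le> (\<sigma> k)\<^sup>2 * ((Lnorm Xi p (AA k))\<^sup>2 + (Lnorm Xi p (BB k))\<^sup>2)" using runk_all[of k] by (elim conjE) assumption
lemma runk7: "BB k \<noteq> (\<lambda>_. 0)" using runk_all[of k] by (elim conjE) assumption
lemma runk8: "1 - \<theta> \<le> \<tau> k" using runk_all[of k] by (elim conjE) assumption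
lemma runk9: "\<tau> k \<le> 1 + \<theta>" using runk_all[of k] by (elim conjE) assumption
lemma runk10: "x (Suc k) = (\<lambda>\<xi>. x k \<xi> - (\<tau> k * al k) *\<^sub>R (x k \<xi> - PN Xi p stg (xh k) \<xi>))" using runk_all[of k] by (elim conjE) assumption
lemma runk11: "w (Suc k) = (\<lambda>\<xi>. w k \<xi> + (\<tau> k * al k * r) *\<^sub>R PM Xi p stg (wh k) \<xi>)" using runk_all[of k] by (elim conjE) assumption
lemmas runk = runk1 runk2 runk3 runk4 runk5 runk6 runk7 runk8 runk9 runk10 runk11

lemma inv: "x k \<in> NAsp Xi stg \<and> w k \<in> Msp Xi p stg"
proof (induction k)
  case 0 then show ?case using run0 by auto
next
  case (Suc k)
  let ?c = "\<tau> k * al k"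
  have e1: "x (Suc k) = (\<lambda>\<xi>. (1 - ?c) *\<^sub>R x k \<xi> + ?c *\<^sub>R PN Xi p stg (xh k) \<xi>)"
    unfolding runk10[of k] by (simp add: fun_eq_iff algebra_simps)
  have e2: "w (Suc k) = (\<lambda>\<xi>. 1 *\<^sub>R w k \<xi> + (?c * r) *\<^sub>R PM Xi p stg (wh k) \<xi>)"
    unfolding runk11[of k] by simp
  have "x (Suc k) \<in> NAsp Xi stg" unfolding e1 using Suc.IH by (intro NAsp_lin PN_in[OF fin pos]) auto
  moreover have "w (Suc k) \<in> Msp Xi p stg" unfolding e2 using Suc.IH by (intro Msp_lin PM_in[OF fin pos]) auto
  ultimately show ?case by blast
qed

lemma xN: "x k \<in> NAsp Xi stg" using inv by blast
lemma wM: "w k \<in> Msp Xi p stg" using inv by blast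

end

lemma ar_ab: fixes a b c s t :: real
  assumes "a - 2*c + b \<le> s*(a+b)" "s*(a+b) \<le> t*(a+b)" shows "c \<ge> ((1 - t)/2)*(a+b)"
proof -
  have "((1 - t)/2)*(a+b) = ((a+b) - t*(a+b)) / 2" by (simp add: left_diff_distrib)
  moreover have "(a+b) - t*(a+b) \<le> 2 * c" using assms by linarith
  ultimately show ?thesis by simp
qed
lemma ar_z: fixes b s :: real assumes "b \<le> s*b" "s < 1" "0 \<le> b" shows "b = 0"
proof (rule ccontr)
  assume "b \<noteq> 0" then have "b > 0" using assms by auto
  then have "s*b < 1*b" using assms(2) by (intro mult_strict_right_mono) auto
  then show False using assms(1) by simp
qed

lemma ar_fejer:
  fixes a b c d G \<tau> \<theta> c0 :: real
  assumes a: "a > 0" and b: "b \<ge> 0" and c: "c \<ge> c0*(a+b)" and c0: "c0 > 0" and G: "G \<ge> 0"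
    and t1: "1 - \<theta> \<le> \<tau>" and t2: "\<tau> \<le> 1 + \<theta>" and th: "0 < \<theta>" "\<theta> < 1"
  shows "d - 2*(\<tau>*(c/a))*(G + c) + (\<tau>*(c/a))\<^sup>2 * a \<le> d - (1-\<theta>\<^sup>2)*c0\<^sup>2*(a+b)"
proof -
  define t where "t = \<tau>*(c/a)"
  have tau0: "\<tau> > 0" using t1 th by linarith
  have c_nn: "c \<ge> 0" using c c0 a b by (smt (verit) mult_nonneg_nonneg)
  have t0: "t \<ge> 0" unfolding t_def using tau0 c_nn a by simp
  have "2*t*G \<ge> 0" using t0 G by simp
  have key: "2*t*c - t\<^sup>2 * a = (2*\<tau> - \<tau>\<^sup>2) * (c\<^sup>2 / a)"
    unfolding t_def using a by (simp add: field_simps power2_eq_square)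
  have q: "2*\<tau> - \<tau>\<^sup>2 \<ge> 1 - \<theta>\<^sup>2"
  proof -
    have "\<bar>\<tau> - 1\<bar> \<le> \<theta>" using t1 t2 by (simp add: abs_le_iff)
    then have "\<bar>\<tau> - 1\<bar>\<^sup>2 \<le> \<theta>\<^sup>2" by (intro power_mono) auto
    then have "(\<tau> - 1)\<^sup>2 \<le> \<theta>\<^sup>2" by simp
    then show ?thesis by (simp add: power2_eq_square algebra_simps)
  qed
  have cs: "c\<^sup>2 \<ge> (c0*(a+b))\<^sup>2" using c c0 a b by (intro power_mono) auto
  have "c\<^sup>2 / a \<ge> c0\<^sup>2 * (a+b)"
  proof -
    have "c0\<^sup>2 * (a+b) * a \<le> c0\<^sup>2 * (a+b) * (a+b)" using a b by (intro mult_left_mono) auto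
    also have "\<dots> = (c0*(a+b))\<^sup>2" by (simp add: power2_eq_square)
    also have "\<dots> \<le> c\<^sup>2" by (rule cs)
    finally show ?thesis using a by (simp add: pos_le_divide_eq)
  qed
  moreover have "1 - \<theta>\<^sup>2 \<ge> 0" using th by (simp add: power_le_one abs_square_le_1)
  ultimately have "(2*\<tau> - \<tau>\<^sup>2) * (c\<^sup>2 / a) \<ge> (1-\<theta>\<^sup>2) * (c0\<^sup>2*(a+b))"
    using q c0 a b by (intro mult_mono) auto
  then have "2*t*c - t\<^sup>2 * a \<ge> (1-\<theta>\<^sup>2)*c0\<^sup>2*(a+b)" using key by (simp add: mult.assoc)
  then show ?thesis unfolding t_def[symmetric] using \<open>2*t*G \<ge> 0\<close> by (simp add: algebra_simps)
qed

context ipha begin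

lemma dec_xh: "PN Xi p stg (xh k) \<xi> + PM Xi p stg (xh k) \<xi> = xh k \<xi>"
  using decomp[OF fin pos runk3] .
lemma dec_wh: "PN Xi p stg (wh k) \<xi> + PM Xi p stg (wh k) \<xi> = wh k \<xi>"
  using decomp[OF fin pos runk4] .

lemma AL: "AA k \<in> Lsp Xi"
  using xN[of k] PN_Lsp[OF fin pos, where x="xh k"] PM_Lsp[OF fin pos, where x="wh k"]
  unfolding Lsp_def by (auto dest: NAsp_Lsp simp: Lsp_def)
lemma BL: "BB k \<in> Lsp Xi"
  using xN[of k] PN_Lsp[OF fin pos, where x="wh k"] PM_Lsp[OF fin pos, where x="xh k"]
  unfolding Lsp_def by (auto dest: NAsp_Lsp simp: Lsp_def)

lemma AB_diff: "(\<lambda>\<xi>. AA k \<xi> - BB k \<xi>) = (\<lambda>\<xi>. wh k \<xi> - xh k \<xi>)"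
proof
  fix \<xi>
  have "AA k \<xi> - BB k \<xi> = (PN Xi p stg (wh k) \<xi> + PM Xi p stg (wh k) \<xi>) - (PN Xi p stg (xh k) \<xi> + PM Xi p stg (xh k) \<xi>)"
    by (simp add: algebra_simps)
  then show "AA k \<xi> - BB k \<xi> = wh k \<xi> - xh k \<xi>" by (simp only: dec_xh dec_wh)
qed

lemma ip_diff_self: "ip Xi p (\<lambda>\<xi>. u \<xi> - v \<xi>) (\<lambda>\<xi>. u \<xi> - v \<xi>) = ip Xi p u u - 2 * ip Xi p u v + ip Xi p v v"
  by (simp add: ip_lin ip_sym[of Xi p v u])

lemma sq_eq: "(Lnorm Xi p u)\<^sup>2 = ip Xi p u u" by (rule Lnorm_sq[OF pos])

lemma delta_bound: "ip Xi p (\<lambda>\<xi>. AA k \<xi> - BB k \<xi>) (\<lambda>\<xi>. AA k \<xi> - BB k \<xi>) \<le> (\<sigma> k)\<^sup>2 * (ip Xi p (AA k) (AA k) + ip Xi p (BB k) (BB k))"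
  using runk6[of k] unfolding AB_diff sq_eq .

lemma nonnegA: "ip Xi p (AA k) (AA k) \<ge> 0" by (rule ip_self_nonneg[OF pos])
lemma nonnegB: "ip Xi p (BB k) (BB k) \<ge> 0" by (rule ip_self_nonneg[OF pos])

lemma sig_sq: "(\<sigma> k)\<^sup>2 \<le> sbar\<^sup>2" "sbar\<^sup>2 < 1"
proof -
  show "(\<sigma> k)\<^sup>2 \<le> sbar\<^sup>2" using runk1[of k] runk2[of k] by (intro power_mono) auto
  show "sbar\<^sup>2 < 1" using run0 by (simp add: power_less_one_iff abs_less_iff)
qed

lemma ab_lower: "ip Xi p (AA k) (BB k) \<ge> ((1 - sbar\<^sup>2) / 2) * (ip Xi p (AA k) (AA k) + ip Xi p (BB k) (BB k))"
proof -
  let ?a = "ip Xi p (AA k) (AA k)" and ?b = "ip Xi p (BB k) (BB k)" and ?c = "ip Xi p (AA k) (BB k)"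
  have "?a - 2 * ?c + ?b \<le> (\<sigma> k)\<^sup>2 * (?a + ?b)" using delta_bound[of k] unfolding ip_diff_self .
  moreover have "(\<sigma> k)\<^sup>2 * (?a + ?b) \<le> sbar\<^sup>2 * (?a + ?b)"
    using sig_sq(1)[of k] nonnegA[of k] nonnegB[of k] by (intro mult_right_mono) auto
  ultimately show ?thesis by (rule ar_ab)
qed

lemma AA_pos: "ip Xi p (AA k) (AA k) > 0"
proof (rule ccontr)
  assume "\<not> ?thesis"
  then have a0: "ip Xi p (AA k) (AA k) = 0" using nonnegA[of k] by linarith
  have A0: "AA k = (\<lambda>_. 0)" by (rule ip_self_zero_Lsp[OF fin pos a0 AL])
  have "ip Xi p (\<lambda>\<xi>. AA k \<xi> - BB k \<xi>) (\<lambda>\<xi>. AA k \<xi> - BB k \<xi>) = ip Xi p (BB k) (BB k)"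
    unfolding ip_diff_self a0 by (simp add: A0 ip_zero_left)
  then have "ip Xi p (BB k) (BB k) \<le> (\<sigma> k)\<^sup>2 * ip Xi p (BB k) (BB k)" using delta_bound[of k] a0 by simp
  moreover have "(\<sigma> k)\<^sup>2 < 1" using sig_sq(1)[of k] sig_sq(2) by linarith
  ultimately have "ip Xi p (BB k) (BB k) = 0" using nonnegB[of k] by (rule ar_z)
  then have "BB k = (\<lambda>_. 0)" using ip_self_zero_Lsp[OF fin pos _ BL] by blast
  then show False using runk7[of k] by blast
qed

lemma mono_ip:
  assumes sol: "svi_solution Xi p stg F C xs ws"
  shows "ip Xi p (\<lambda>\<xi>. r *\<^sub>R (x k \<xi> - xh k \<xi>) - w k \<xi> + ws \<xi>) (\<lambda>\<xi>. wh k \<xi> - xs \<xi>) \<ge> 0"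
  unfolding ip_def
proof (rule sum_nonneg)
  fix \<xi> assume xi: "\<xi> \<in> Xi"
  obtain v where v: "v \<in> ncone (C \<xi>) (wh k \<xi>)" and eq: "r *\<^sub>R (x k \<xi> - xh k \<xi>) - w k \<xi> = F (wh k \<xi>) \<xi> + v"
    using runk5[of k] xi by blast
  define n2 where "n2 = - F (xs \<xi>) \<xi> - ws \<xi>"
  have n2: "n2 \<in> ncone (C \<xi>) (xs \<xi>)" using sol xi unfolding svi_solution_def n2_def by blast
  have whC: "wh k \<xi> \<in> C \<xi>" and vC: "\<forall>c\<in>C \<xi>. v \<bullet> (c - wh k \<xi>) \<le> 0" using v unfolding ncone_def by auto
  have xsC: "xs \<xi> \<in> C \<xi>" and n2C: "\<forall>c\<in>C \<xi>. n2 \<bullet> (c - xs \<xi>) \<le> 0" using n2 unfolding ncone_def by auto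
  have m: "(F (wh k \<xi>) \<xi> - F (xs \<xi>) \<xi>) \<bullet> (wh k \<xi> - xs \<xi>) \<ge> 0" using mono xi by blast
  have t1: "v \<bullet> (xs \<xi> - wh k \<xi>) \<le> 0" using vC xsC by blast
  have t2: "n2 \<bullet> (wh k \<xi> - xs \<xi>) \<le> 0" using n2C whC by blast
  have t1': "v \<bullet> (wh k \<xi> - xs \<xi>) = - (v \<bullet> (xs \<xi> - wh k \<xi>))" by (simp add: inner_diff_right)
  have "r *\<^sub>R (x k \<xi> - xh k \<xi>) - w k \<xi> + ws \<xi> = (F (wh k \<xi>) \<xi> - F (xs \<xi>) \<xi>) + v - n2"
    unfolding eq n2_def by (simp add: algebra_simps)
  then have "(r *\<^sub>R (x k \<xi> - xh k \<xi>) - w k \<xi> + ws \<xi>) \<bullet> (wh k \<xi> - xs \<xi>)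
     = (F (wh k \<xi>) \<xi> - F (xs \<xi>) \<xi>) \<bullet> (wh k \<xi> - xs \<xi>) + v \<bullet> (wh k \<xi> - xs \<xi>) - n2 \<bullet> (wh k \<xi> - xs \<xi>)"
    by (simp only: inner_add_left inner_diff_left)
  then have "(r *\<^sub>R (x k \<xi> - xh k \<xi>) - w k \<xi> + ws \<xi>) \<bullet> (wh k \<xi> - xs \<xi>) \<ge> 0"
    using m t1 t2 t1' by linarith
  moreover have "p \<xi> \<ge> 0" using pos xi by (simp add: less_imp_le)
  ultimately show "0 \<le> p \<xi> * ((r *\<^sub>R (x k \<xi> - xh k \<xi>) - w k \<xi> + ws \<xi>) \<bullet> (wh k \<xi> - xs \<xi>))"
    by simp
qed

lemma key_ip:
  assumes sol: "svi_solution Xi p stg F C xs ws" and zs_eq: "\<And>\<xi>. zs \<xi> = xs \<xi> - (1/r) *\<^sub>R ws \<xi>"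
  shows "ip Xi p (AA k) (\<lambda>\<xi>. (x k \<xi> - (1/r) *\<^sub>R w k \<xi>) - BB k \<xi> - zs \<xi>) \<ge> 0"
proof -
  have xsN: "xs \<in> NAsp Xi stg" and wsM: "ws \<in> Msp Xi p stg" using sol unfolding svi_solution_def by auto
  define n1 where "n1 = (\<lambda>\<xi>. r *\<^sub>R (x k \<xi> - PN Xi p stg (xh k) \<xi>))"
  define m1 where "m1 = (\<lambda>\<xi>. (-r) *\<^sub>R PM Xi p stg (xh k) \<xi> - w k \<xi> + ws \<xi>)"
  define n2 where "n2 = (\<lambda>\<xi>. PN Xi p stg (wh k) \<xi> - xs \<xi>)"
  define m2 where "m2 = PM Xi p stg (wh k)"
  have n1N: "n1 \<in> NAsp Xi stg" unfolding n1_def by (intro NAsp_scale NAsp_diff xN PN_in[OF fin pos])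
  have n2N: "n2 \<in> NAsp Xi stg" unfolding n2_def by (intro NAsp_diff xsN PN_in[OF fin pos])
  have m1M: "m1 \<in> Msp Xi p stg" unfolding m1_def by (intro Msp_add Msp_diff Msp_scale wM wsM PM_in[OF fin pos])
  have m2M: "m2 \<in> Msp Xi p stg" unfolding m2_def by (rule PM_in[OF fin pos])
  have rne: "r \<noteq> 0" using rpos by simp
  have e1: "(\<lambda>\<xi>. r *\<^sub>R (x k \<xi> - xh k \<xi>) - w k \<xi> + ws \<xi>) = (\<lambda>\<xi>. n1 \<xi> + m1 \<xi>)"
  proof
    fix \<xi>
    have d: "xh k \<xi> = PN Xi p stg (xh k) \<xi> + PM Xi p stg (xh k) \<xi>" by (simp add: dec_xh)
    show "r *\<^sub>R (x k \<xi> - xh k \<xi>) - w k \<xi> + ws \<xi> = n1 \<xi> + m1 \<xi>"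
      unfolding n1_def m1_def by (subst d) (simp add: algebra_simps)
  qed
  have e2: "(\<lambda>\<xi>. wh k \<xi> - xs \<xi>) = (\<lambda>\<xi>. n2 \<xi> + m2 \<xi>)"
  proof
    fix \<xi>
    have d: "wh k \<xi> = PN Xi p stg (wh k) \<xi> + PM Xi p stg (wh k) \<xi>" by (simp add: dec_wh)
    show "wh k \<xi> - xs \<xi> = n2 \<xi> + m2 \<xi>"
      unfolding n2_def m2_def by (subst d) (simp add: algebra_simps)
  qed
  have e3: "(\<lambda>\<xi>. r *\<^sub>R AA k \<xi>) = (\<lambda>\<xi>. n1 \<xi> + r *\<^sub>R m2 \<xi>)"
    unfolding n1_def m2_def by (simp add: algebra_simps)
  have e4: "(\<lambda>\<xi>. (x k \<xi> - (1/r) *\<^sub>R w k \<xi>) - BB k \<xi> - zs \<xi>) = (\<lambda>\<xi>. n2 \<xi> + (1/r) *\<^sub>R m1 \<xi>)"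
  proof
    fix \<xi>
    show "(x k \<xi> - (1/r) *\<^sub>R w k \<xi>) - BB k \<xi> - zs \<xi> = n2 \<xi> + (1/r) *\<^sub>R m1 \<xi>"
      unfolding n2_def m1_def zs_eq using rne by (simp add: algebra_simps)
  qed
  have "r * ip Xi p (AA k) (\<lambda>\<xi>. (x k \<xi> - (1/r) *\<^sub>R w k \<xi>) - BB k \<xi> - zs \<xi>)
      = ip Xi p (\<lambda>\<xi>. r *\<^sub>R AA k \<xi>) (\<lambda>\<xi>. (x k \<xi> - (1/r) *\<^sub>R w k \<xi>) - BB k \<xi> - zs \<xi>)"
    by (simp only: ip_scale_left)
  also have "\<dots> = ip Xi p (\<lambda>\<xi>. n1 \<xi> + r *\<^sub>R m2 \<xi>) (\<lambda>\<xi>. n2 \<xi> + (1/r) *\<^sub>R m1 \<xi>)"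
    by (simp only: e3 e4)
  also have "\<dots> = ip Xi p n1 n2 + ip Xi p (\<lambda>\<xi>. r *\<^sub>R m2 \<xi>) (\<lambda>\<xi>. (1/r) *\<^sub>R m1 \<xi>)"
    by (rule ip_NM[OF fin pos n1N n2N Msp_scale[OF m2M] Msp_scale[OF m1M]])
  also have "\<dots> = ip Xi p n1 n2 + ip Xi p m1 m2"
    using rne by (simp add: ip_scale_left ip_scale_right ip_sym[of Xi p m2 m1])
  also have "\<dots> = ip Xi p (\<lambda>\<xi>. n1 \<xi> + m1 \<xi>) (\<lambda>\<xi>. n2 \<xi> + m2 \<xi>)"
    by (rule ip_NM[OF fin pos n1N n2N m1M m2M, symmetric])
  also have "\<dots> \<ge> 0" unfolding e1[symmetric] e2[symmetric] by (rule mono_ip[OF sol])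
  finally show ?thesis using rpos by (simp add: zero_le_mult_iff)
qed

lemma Z_step:
  "(\<lambda>\<xi>. x (Suc k) \<xi> - (1/r) *\<^sub>R w (Suc k) \<xi> - zs \<xi>) = (\<lambda>\<xi>. (x k \<xi> - (1/r) *\<^sub>R w k \<xi> - zs \<xi>) - (\<tau> k * al k) *\<^sub>R AA k \<xi>)"
proof -
  obtain t where t: "t = \<tau> k * al k" by blast
  have rne: "r \<noteq> 0" using rpos by simp
  have ex: "x (Suc k) = (\<lambda>\<xi>. x k \<xi> - t *\<^sub>R (x k \<xi> - PN Xi p stg (xh k) \<xi>))" using runk10[of k] t by simp
  have ew: "w (Suc k) = (\<lambda>\<xi>. w k \<xi> + (t*r) *\<^sub>R PM Xi p stg (wh k) \<xi>)" using runk11[of k] t by simp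
  have sc: "(1/r) *\<^sub>R ((t*r) *\<^sub>R v) = t *\<^sub>R v" for v :: "real^'n" using rne by simp
  show ?thesis unfolding ex ew t[symmetric]
    using rne by (simp add: fun_eq_iff algebra_simps sc)
qed

lemma fejer:
  assumes sol: "svi_solution Xi p stg F C xs ws" and zs_eq: "\<And>\<xi>. zs \<xi> = xs \<xi> - (1/r) *\<^sub>R ws \<xi>"
  shows "ip Xi p (\<lambda>\<xi>. x (Suc k) \<xi> - (1/r) *\<^sub>R w (Suc k) \<xi> - zs \<xi>) (\<lambda>\<xi>. x (Suc k) \<xi> - (1/r) *\<^sub>R w (Suc k) \<xi> - zs \<xi>)
    \<le> ip Xi p (\<lambda>\<xi>. x k \<xi> - (1/r) *\<^sub>R w k \<xi> - zs \<xi>) (\<lambda>\<xi>. x k \<xi> - (1/r) *\<^sub>R w k \<xi> - zs \<xi>)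
       - (1-\<theta>\<^sup>2)*((1 - sbar\<^sup>2)/2)\<^sup>2*(ip Xi p (AA k) (AA k) + ip Xi p (BB k) (BB k))"
proof -
  define d where "d = (\<lambda>\<xi>. x k \<xi> - (1/r) *\<^sub>R w k \<xi> - zs \<xi>)"
  define Z2 where "Z2 = (\<lambda>\<xi>. (x k \<xi> - (1/r) *\<^sub>R w k \<xi>) - BB k \<xi> - zs \<xi>)"
  define A where "A = AA k"
  define a where "a = ip Xi p A A"
  define b where "b = ip Xi p (BB k) (BB k)"
  define c where "c = ip Xi p A (BB k)"
  define G where "G = ip Xi p A Z2"
  have alk: "al k = c / a" unfolding a_def c_def A_def sq_eq ..
  have dd: "d = (\<lambda>\<xi>. Z2 \<xi> + BB k \<xi>)" unfolding d_def Z2_def by (simp add: fun_eq_iff)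
  have Ad: "ip Xi p A d = G + c" unfolding dd G_def c_def by (simp only: ip_add_right)
  have s1: "(\<lambda>\<xi>. x (Suc k) \<xi> - (1/r) *\<^sub>R w (Suc k) \<xi> - zs \<xi>) = (\<lambda>\<xi>. d \<xi> - (\<tau> k*(c/a)) *\<^sub>R A \<xi>)"
    unfolding Z_step alk d_def A_def ..
  have gen: "ip Xi p (\<lambda>\<xi>. d \<xi> - t *\<^sub>R A \<xi>) (\<lambda>\<xi>. d \<xi> - t *\<^sub>R A \<xi>) = ip Xi p d d - 2*t*(G + c) + t\<^sup>2 * a" for t
  proof -
    have "ip Xi p (\<lambda>\<xi>. d \<xi> - t *\<^sub>R A \<xi>) (\<lambda>\<xi>. d \<xi> - t *\<^sub>R A \<xi>) = ip Xi p d d - 2 * (t * ip Xi p d A) + t * (t * ip Xi p A A)"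
      by (simp only: ip_diff_self ip_scale_left ip_scale_right)
    also have "\<dots> = ip Xi p d d - 2*t*(G + c) + t\<^sup>2 * a"
      unfolding ip_sym[of Xi p d A] Ad a_def[symmetric] by (simp add: power2_eq_square)
    finally show ?thesis .
  qed
  have E1: "ip Xi p (\<lambda>\<xi>. x (Suc k) \<xi> - (1/r) *\<^sub>R w (Suc k) \<xi> - zs \<xi>) (\<lambda>\<xi>. x (Suc k) \<xi> - (1/r) *\<^sub>R w (Suc k) \<xi> - zs \<xi>)
      = ip Xi p d d - 2*(\<tau> k*(c/a))*(G + c) + (\<tau> k*(c/a))\<^sup>2 * a"
    unfolding s1 gen ..
  have "ip Xi p d d - 2*(\<tau> k*(c/a))*(G + c) + (\<tau> k*(c/a))\<^sup>2 * a \<le> ip Xi p d d - (1-\<theta>\<^sup>2)*((1 - sbar\<^sup>2)/2)\<^sup>2*(a+b)"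
  proof (rule ar_fejer)
    show "a > 0" unfolding a_def A_def by (rule AA_pos)
    show "b \<ge> 0" unfolding b_def by (rule nonnegB)
    show "c \<ge> (1 - sbar\<^sup>2) / 2 * (a + b)" unfolding c_def a_def b_def A_def by (rule ab_lower)
    show "(1 - sbar\<^sup>2) / 2 > 0" using sig_sq(2) by simp
    show "G \<ge> 0" unfolding G_def A_def Z2_def by (rule key_ip[OF sol zs_eq])
    show "1 - \<theta> \<le> \<tau> k" "\<tau> k \<le> 1 + \<theta>" by (rule runk8, rule runk9)
    show "0 < \<theta>" "\<theta> < 1" using run0 by auto
  qed
  then show ?thesis unfolding E1 d_def a_def b_def A_def .
qed

lemma Zp_in_ATAinv:
  "(\<lambda>\<xi>. (x k \<xi> - (1/r) *\<^sub>R w k \<xi>) - BB k \<xi>) \<in> ATAinv Xi p stg r F C (\<lambda>\<xi>. r *\<^sub>R AA k \<xi>)"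
proof -
  have rne: "r \<noteq> 0" using rpos by simp
  define Zp where "Zp = (\<lambda>\<xi>. (x k \<xi> - (1/r) *\<^sub>R w k \<xi>) - BB k \<xi>)"
  define m where "m = (\<lambda>\<xi>. (-1) *\<^sub>R PM Xi p stg (xh k) \<xi> - (1/r) *\<^sub>R w k \<xi>)"
  have mM: "m \<in> Msp Xi p stg" unfolding m_def by (intro Msp_diff Msp_scale PM_in[OF fin pos] wM)
  have whN: "PN Xi p stg (wh k) \<in> NAsp Xi stg" by (rule PN_in[OF fin pos])
  have Zeq: "Zp = (\<lambda>\<xi>. PN Xi p stg (wh k) \<xi> + m \<xi>)"
    unfolding Zp_def m_def by (simp add: fun_eq_iff algebra_simps)
  have ZL: "Zp \<in> Lsp Xi" unfolding Zeq using NAsp_Lsp[OF whN] Msp_Lsp[OF mM] by (simp add: Lsp_def)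
  have PNZ: "PN Xi p stg Zp = PN Xi p stg (wh k)" by (rule split_PN[OF fin pos whN mM Zeq])
  have PMZ: "PM Xi p stg Zp = m" by (rule split_PM[OF fin pos whN mM Zeq])
  define Y where "Y = Aop Xi p stg r Zp"
  have Yeq: "Y = (\<lambda>\<xi>. PN Xi p stg (wh k) \<xi> + (\<lambda>\<xi>. r *\<^sub>R m \<xi>) \<xi>)"
    unfolding Y_def Aop_def PNZ PMZ by simp
  have PNY: "PN Xi p stg Y = PN Xi p stg (wh k)" by (rule split_PN[OF fin pos whN Msp_scale[OF mM] Yeq])
  have PMY: "PM Xi p stg Y = (\<lambda>\<xi>. r *\<^sub>R m \<xi>)" by (rule split_PM[OF fin pos whN Msp_scale[OF mM] Yeq])
  define n' where "n' = (\<lambda>\<xi>. r *\<^sub>R (x k \<xi> - PN Xi p stg (xh k) \<xi>))"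
  have n'N: "n' \<in> NAsp Xi stg" unfolding n'_def by (intro NAsp_scale NAsp_diff xN PN_in[OF fin pos])
  have pwM: "PM Xi p stg (wh k) \<in> Msp Xi p stg" by (rule PM_in[OF fin pos])
  define Y2 where "Y2 = (\<lambda>\<xi>. n' \<xi> + PM Xi p stg (wh k) \<xi>)"
  have PNY2: "PN Xi p stg Y2 = n'" by (rule split_PN[OF fin pos n'N pwM Y2_def])
  have PMY2: "PM Xi p stg Y2 = PM Xi p stg (wh k)" by (rule split_PM[OF fin pos n'N pwM Y2_def])
  have Y2L: "Y2 \<in> Lsp Xi" unfolding Y2_def using NAsp_Lsp[OF n'N] Msp_Lsp[OF pwM] by (simp add: Lsp_def)
  have AopY2: "Aop Xi p stg r Y2 = (\<lambda>\<xi>. r *\<^sub>R AA k \<xi>)"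
    unfolding Aop_def PNY2 PMY2 n'_def by (simp add: fun_eq_iff algebra_simps)
  have ueq: "(\<lambda>\<xi>. PN Xi p stg Y \<xi> + PM Xi p stg Y2 \<xi>) = wh k"
    unfolding PNY PMY2 by (simp add: fun_eq_iff dec_wh)
  define Vk where "Vk = (\<lambda>\<xi>. r *\<^sub>R (x k \<xi> - xh k \<xi>) - w k \<xi>)"
  have Veq: "(\<lambda>\<xi>. PN Xi p stg Y2 \<xi> + PM Xi p stg Y \<xi>) = Vk"
  proof
    fix \<xi>
    have d: "xh k \<xi> = PN Xi p stg (xh k) \<xi> + PM Xi p stg (xh k) \<xi>" by (simp add: dec_xh)
    show "PN Xi p stg Y2 \<xi> + PM Xi p stg Y \<xi> = Vk \<xi>"
      unfolding PNY2 PMY n'_def m_def Vk_def using rne by (subst d) (simp add: algebra_simps)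
  qed
  have VkL: "Vk \<in> Lsp Xi" unfolding Vk_def using NAsp_Lsp[OF xN] runk3 Msp_Lsp[OF wM] by (simp add: Lsp_def)
  define V' where "V' = (\<lambda>\<xi>. if \<xi> \<in> Xi then Vk \<xi> - F (wh k \<xi>) \<xi> else 0)"
  have V'L: "V' \<in> Lsp Xi" unfolding V'_def Lsp_def by simp
  have V'pw: "\<forall>\<xi>\<in>Xi. V' \<xi> \<in> ncone (C \<xi>) (wh k \<xi>)"
  proof
    fix \<xi> assume xi: "\<xi> \<in> Xi"
    obtain v where v: "v \<in> ncone (C \<xi>) (wh k \<xi>)" and eq: "r *\<^sub>R (x k \<xi> - xh k \<xi>) - w k \<xi> = F (wh k \<xi>) \<xi> + v"
      using runk5[of k] xi by blast
    have "V' \<xi> = v" unfolding V'_def Vk_def using xi eq by simp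
    then show "V' \<xi> \<in> ncone (C \<xi>) (wh k \<xi>)" using v by simp
  qed
  have V'c: "V' \<in> LNcone Xi p (Ccal Xi C) (wh k)" by (rule LNcone_of_pointwise[OF pos V'L runk4 V'pw])
  have FV: "Vk = (\<lambda>\<xi>. Fcal Xi F (wh k) \<xi> + V' \<xi>)"
    using VkL unfolding V'_def Fcal_def by (auto simp: fun_eq_iff Lsp_def)
  have "\<exists>v\<in>LNcone Xi p (Ccal Xi C) (\<lambda>\<xi>. PN Xi p stg Y \<xi> + PM Xi p stg Y2 \<xi>).
     (\<lambda>\<xi>. PN Xi p stg Y2 \<xi> + PM Xi p stg Y \<xi>) = (\<lambda>\<xi>. Fcal Xi F (\<lambda>\<xi>. PN Xi p stg Y \<xi> + PM Xi p stg Y2 \<xi>) \<xi> + v \<xi>)"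
    unfolding ueq Veq using V'c FV by blast
  then have "Y2 \<in> Top Xi p stg F C Y"
    unfolding Top_def Let_def using Y2L by blast
  then have "\<exists>y\<in>Top Xi p stg F C (Aop Xi p stg r Zp). (\<lambda>\<xi>. r *\<^sub>R AA k \<xi>) = Aop Xi p stg r y"
    using AopY2 unfolding Y_def by (intro bexI[of _ Y2]) auto
  then show ?thesis unfolding ATAinv_def Zp_def[symmetric] mem_Collect_eq using ZL by blast
qed

lemma Lnorm_scale: "Lnorm Xi p (\<lambda>\<xi>. c *\<^sub>R u \<xi>) = \<bar>c\<bar> * Lnorm Xi p u"
proof -
  have "Lnorm Xi p (\<lambda>\<xi>. c *\<^sub>R u \<xi>) = sqrt (c\<^sup>2 * ip Xi p u u)"
    unfolding Lnorm_def by (simp add: ip_scale_left ip_scale_right power2_eq_square)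
  also have "\<dots> = \<bar>c\<bar> * Lnorm Xi p u" unfolding Lnorm_def by (simp add: real_sqrt_mult)
  finally show ?thesis .
qed

lemma err_bound:
  assumes lip: "\<forall>v z. v \<in> Lsp Xi \<and> z \<in> ATAinv Xi p stg r F C v \<and> Lnorm Xi p v \<le> \<eta> \<longrightarrow>
        Lnorm Xi p (\<lambda>\<xi>. z \<xi> - zs \<xi>) \<le> L * Lnorm Xi p v"
    and L: "L > 0" and small: "r * Lnorm Xi p (AA k) \<le> \<eta>"
  shows "ip Xi p (\<lambda>\<xi>. x k \<xi> - (1/r) *\<^sub>R w k \<xi> - zs \<xi>) (\<lambda>\<xi>. x k \<xi> - (1/r) *\<^sub>R w k \<xi> - zs \<xi>)
     \<le> 2*(1 + L\<^sup>2 * r\<^sup>2) * (ip Xi p (AA k) (AA k) + ip Xi p (BB k) (BB k))"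
proof -
  define Zp where "Zp = (\<lambda>\<xi>. (x k \<xi> - (1/r) *\<^sub>R w k \<xi>) - BB k \<xi>)"
  define v where "v = (\<lambda>\<xi>. r *\<^sub>R AA k \<xi>)"
  have vL: "v \<in> Lsp Xi" unfolding v_def using AL[of k] by (simp add: Lsp_def)
  have nv: "Lnorm Xi p v = r * Lnorm Xi p (AA k)" unfolding v_def Lnorm_scale using rpos by simp
  have zA: "Zp \<in> ATAinv Xi p stg r F C v" unfolding Zp_def v_def by (rule Zp_in_ATAinv)
  have "Lnorm Xi p v \<le> \<eta>" using nv small by simp
  then have "Lnorm Xi p (\<lambda>\<xi>. Zp \<xi> - zs \<xi>) \<le> L * Lnorm Xi p v"
    using lip vL zA by blast
  then have "(Lnorm Xi p (\<lambda>\<xi>. Zp \<xi> - zs \<xi>))\<^sup>2 \<le> (L * Lnorm Xi p v)\<^sup>2"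
    by (intro power_mono) (auto simp: Lnorm_def ip_self_nonneg[OF pos])
  then have g: "ip Xi p (\<lambda>\<xi>. Zp \<xi> - zs \<xi>) (\<lambda>\<xi>. Zp \<xi> - zs \<xi>) \<le> L\<^sup>2 * r\<^sup>2 * ip Xi p (AA k) (AA k)"
    unfolding sq_eq power_mult_distrib nv by (simp add: sq_eq mult.assoc)
  have dd: "(\<lambda>\<xi>. x k \<xi> - (1/r) *\<^sub>R w k \<xi> - zs \<xi>) = (\<lambda>\<xi>. (\<lambda>\<xi>. Zp \<xi> - zs \<xi>) \<xi> + BB k \<xi>)"
    unfolding Zp_def by (simp add: fun_eq_iff)
  have "ip Xi p (\<lambda>\<xi>. x k \<xi> - (1/r) *\<^sub>R w k \<xi> - zs \<xi>) (\<lambda>\<xi>. x k \<xi> - (1/r) *\<^sub>R w k \<xi> - zs \<xi>)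
     \<le> 2 * ip Xi p (\<lambda>\<xi>. Zp \<xi> - zs \<xi>) (\<lambda>\<xi>. Zp \<xi> - zs \<xi>) + 2 * ip Xi p (BB k) (BB k)"
    unfolding dd by (rule ip_par_le[OF pos])
  also have "\<dots> \<le> 2 * (L\<^sup>2 * r\<^sup>2 * ip Xi p (AA k) (AA k)) + 2 * ip Xi p (BB k) (BB k)" using g by simp
  also have "\<dots> \<le> 2*(1 + L\<^sup>2 * r\<^sup>2) * (ip Xi p (AA k) (AA k) + ip Xi p (BB k) (BB k))"
    using nonnegA[of k] nonnegB[of k] by (simp add: algebra_simps)
  finally show ?thesis .
qed

lemma Mr_eq:
  assumes sol: "svi_solution Xi p stg F C xs ws" and zs_eq: "\<And>\<xi>. zs \<xi> = xs \<xi> - (1/r) *\<^sub>R ws \<xi>"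
  shows "Mr_norm Xi p r (\<lambda>\<xi>. x k \<xi> - xs \<xi>) (\<lambda>\<xi>. w k \<xi> - ws \<xi>)
     = sqrt (ip Xi p (\<lambda>\<xi>. x k \<xi> - (1/r) *\<^sub>R w k \<xi> - zs \<xi>) (\<lambda>\<xi>. x k \<xi> - (1/r) *\<^sub>R w k \<xi> - zs \<xi>))"
proof -
  have xsN: "xs \<in> NAsp Xi stg" and wsM: "ws \<in> Msp Xi p stg" using sol unfolding svi_solution_def by auto
  define n where "n = (\<lambda>\<xi>. x k \<xi> - xs \<xi>)"
  define m where "m = (\<lambda>\<xi>. w k \<xi> - ws \<xi>)"
  have nN: "n \<in> NAsp Xi stg" unfolding n_def by (intro NAsp_diff xN xsN)
  have mM: "m \<in> Msp Xi p stg" unfolding m_def by (intro Msp_diff wM wsM)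
  have rne: "r \<noteq> 0" using rpos by simp
  have eq: "(\<lambda>\<xi>. x k \<xi> - (1/r) *\<^sub>R w k \<xi> - zs \<xi>) = (\<lambda>\<xi>. n \<xi> + (\<lambda>\<xi>. (-1/r) *\<^sub>R m \<xi>) \<xi>)"
    unfolding n_def m_def zs_eq by (simp add: fun_eq_iff algebra_simps)
  have "ip Xi p (\<lambda>\<xi>. x k \<xi> - (1/r) *\<^sub>R w k \<xi> - zs \<xi>) (\<lambda>\<xi>. x k \<xi> - (1/r) *\<^sub>R w k \<xi> - zs \<xi>)
     = ip Xi p n n + ip Xi p (\<lambda>\<xi>. (-1/r) *\<^sub>R m \<xi>) (\<lambda>\<xi>. (-1/r) *\<^sub>R m \<xi>)"
    unfolding eq by (rule ip_NM[OF fin pos nN nN Msp_scale[OF mM] Msp_scale[OF mM]])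
  also have "\<dots> = ip Xi p n n + ip Xi p m m / r\<^sup>2"
    by (simp only: ip_scale_left ip_scale_right) (simp add: power2_eq_square)
  finally show ?thesis unfolding Mr_norm_def sq_eq n_def m_def by simp
qed

end

theorem corollary2:
  fixes Xi :: "(nat \<Rightarrow> 'e) set" and p :: "(nat \<Rightarrow> 'e) \<Rightarrow> real"
    and N :: nat and stg :: "'n::finite \<Rightarrow> nat" and r :: real
    and F :: "real^'n \<Rightarrow> (nat \<Rightarrow> 'e) \<Rightarrow> real^'n" and C :: "(nat \<Rightarrow> 'e) \<Rightarrow> (real^'n) set"
    and sbar \<theta> :: real and \<sigma> \<tau> :: "nat \<Rightarrow> real"
    and x w xh wh :: "nat \<Rightarrow> (nat \<Rightarrow> 'e) \<Rightarrow> real^'n"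
  assumes "finite Xi" and "Xi \<noteq> {}"
    and "\<forall>\<xi>\<in>Xi. p \<xi> > 0"
    and "\<forall>\<xi>\<in>Xi. \<forall>\<xi>'\<in>Xi. (\<forall>i\<in>{1..N}. \<xi> i = \<xi>' i) \<longrightarrow> \<xi> = \<xi>'"
    and "\<forall>k. 1 \<le> stg k \<and> stg k \<le> N"
    and "\<forall>\<xi>\<in>Xi. C \<xi> \<noteq> {} \<and> closed (C \<xi>) \<and> convex (C \<xi>)"
    and "\<forall>\<xi>\<in>Xi. continuous_on UNIV (\<lambda>u. F u \<xi>)"
    and "\<forall>\<xi>\<in>Xi. \<forall>u v. (F u \<xi> - F v \<xi>) \<bullet> (u - v) \<ge> 0"
    and "r > 0"
    and "lipschitz_at_zero Xi p (ATAinv Xi p stg r F C)"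
    and "ipha_run Xi p stg r F C sbar \<theta> \<sigma> \<tau> x w xh wh"
  shows "\<exists>xs ws. svi_solution Xi p stg F C xs ws \<and>
           ((\<lambda>k. Mr_norm Xi p r (\<lambda>\<xi>. x k \<xi> - xs \<xi>) (\<lambda>\<xi>. w k \<xi> - ws \<xi>)) \<longlonglongrightarrow> 0) \<and>
           (\<exists>q. 0 \<le> q \<and> q < 1 \<and> (\<exists>K. \<forall>k\<ge>K.
              Mr_norm Xi p r (\<lambda>\<xi>. x (Suc k) \<xi> - xs \<xi>) (\<lambda>\<xi>. w (Suc k) \<xi> - ws \<xi>)
              \<le> q * Mr_norm Xi p r (\<lambda>\<xi>. x k \<xi> - xs \<xi>) (\<lambda>\<xi>. w k \<xi> - ws \<xi>)))"
proof -
  have fin: "finite Xi" and pos: "\<forall>\<xi>\<in>Xi. p \<xi> > 0" and rpos: "r > 0" using assms by auto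
  have loc: "ipha Xi p stg r F C sbar \<theta> \<sigma> \<tau> x w xh wh"
    by (rule ipha.intro) (rule assms)+
  interpret I: ipha Xi p stg r F C sbar \<theta> \<sigma> \<tau> x w xh wh by (rule loc)
  obtain zs L \<eta> where S0: "ATAinv Xi p stg r F C (\<lambda>_. 0) = {zs}" and L: "L > 0" and eta: "\<eta> > 0"
    and lip: "\<forall>v z. v \<in> Lsp Xi \<and> z \<in> ATAinv Xi p stg r F C v \<and> Lnorm Xi p v \<le> \<eta> \<longrightarrow>
        Lnorm Xi p (\<lambda>\<xi>. z \<xi> - zs \<xi>) \<le> L * Lnorm Xi p v"
    using assms(10) unfolding lipschitz_at_zero_def by blast
  have zs: "zs \<in> ATAinv Xi p stg r F C (\<lambda>_. 0)" using S0 by simp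
  have zsL: "zs \<in> Lsp Xi" using zs unfolding ATAinv_def by simp
  define xs where "xs = PN Xi p stg zs"
  define ws where "ws = (\<lambda>\<xi>. (-r) *\<^sub>R PM Xi p stg zs \<xi>)"
  have sol: "svi_solution Xi p stg F C xs ws"
    unfolding xs_def ws_def by (rule sol_from_zero[OF fin pos rpos zs])
  have zs_eq: "zs \<xi> = xs \<xi> - (1/r) *\<^sub>R ws \<xi>" for \<xi>
    using decomp[OF fin pos zsL, of stg \<xi>] rpos unfolding xs_def ws_def by simp
  define E where "E k = ip Xi p (\<lambda>\<xi>. x k \<xi> - (1/r) *\<^sub>R w k \<xi> - zs \<xi>) (\<lambda>\<xi>. x k \<xi> - (1/r) *\<^sub>R w k \<xi> - zs \<xi>)" for k
  define e where "e k = ip Xi p (I.AA k) (I.AA k) + ip Xi p (I.BB k) (I.BB k)" for k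
  define \<kappa> where "\<kappa> = (1-\<theta>\<^sup>2)*((1 - sbar\<^sup>2)/2)\<^sup>2"
  define K0 where "K0 = 2*(1 + L\<^sup>2 * r\<^sup>2)"
  have E_nn: "E k \<ge> 0" for k unfolding E_def by (rule ip_self_nonneg[OF pos])
  have e_nn: "e k \<ge> 0" for k unfolding e_def using I.nonnegA I.nonnegB by (simp add: add_nonneg_nonneg)
  have fej: "E (Suc k) \<le> E k - \<kappa> * e k" for k
    unfolding E_def e_def \<kappa>_def by (rule I.fejer[OF sol zs_eq])
  have th: "0 < \<theta>" "\<theta> < 1" "0 < sbar" "sbar < 1" using I.run0 by auto
  have kpos: "\<kappa> > 0"
  proof -
    have "\<theta>\<^sup>2 < 1" using th by (simp add: power_less_one_iff abs_less_iff)
    moreover have "sbar\<^sup>2 < 1" using th by (simp add: power_less_one_iff abs_less_iff)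
    ultimately show ?thesis unfolding \<kappa>_def by simp
  qed
  have K0pos: "K0 > 0" unfolding K0_def by (simp add: add_pos_nonneg)
  have Mr: "Mr_norm Xi p r (\<lambda>\<xi>. x k \<xi> - xs \<xi>) (\<lambda>\<xi>. w k \<xi> - ws \<xi>) = sqrt (E k)" for k
    unfolding E_def by (rule I.Mr_eq[OF sol zs_eq])
  have psum: "(\<Sum>i<n. e i) \<le> E 0 / \<kappa>" for n
  proof -
    have "\<kappa> * (\<Sum>i<n. e i) \<le> E 0 - E n"
    proof (induction n)
      case 0 then show ?case by simp
    next
      case (Suc n)
      have "\<kappa> * (\<Sum>i<Suc n. e i) = \<kappa> * (\<Sum>i<n. e i) + \<kappa> * e n" by (simp add: distrib_left)
      also have "\<dots> \<le> E 0 - E n + \<kappa> * e n" using Suc.IH by simp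
      also have "\<dots> \<le> E 0 - E (Suc n)" using fej[of n] by simp
      finally show ?case .
    qed
    then have "\<kappa> * (\<Sum>i<n. e i) \<le> E 0" using E_nn[of n] by simp
    then show ?thesis using kpos by (simp add: field_simps)
  qed
  have summ: "summable e" by (rule summableI_nonneg_bounded[OF e_nn psum])
  have elim: "e \<longlonglongrightarrow> 0" by (rule summable_LIMSEQ_zero[OF summ])
  have "eventually (\<lambda>k. e k < (\<eta>/r)\<^sup>2) sequentially"
    using order_tendstoD(2)[OF elim, of "(\<eta>/r)\<^sup>2"] eta rpos by simp
  then obtain K where K: "\<And>k. k \<ge> K \<Longrightarrow> e k < (\<eta>/r)\<^sup>2" unfolding eventually_sequentially by blast
  have Ebound: "E k \<le> K0 * e k" if k: "k \<ge> K" for k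
  proof -
    define a where "a = ip Xi p (I.AA k) (I.AA k)"
    define b where "b = ip Xi p (I.BB k) (I.BB k)"
    have ab: "e k = a + b" unfolding e_def a_def b_def ..
    have b0: "b \<ge> 0" unfolding b_def by (rule I.nonnegB)
    have "a \<le> (\<eta>/r)\<^sup>2" using K[OF k] ab b0 by linarith
    then have "sqrt a \<le> sqrt ((\<eta>/r)\<^sup>2)" by (rule real_sqrt_le_mono)
    also have "sqrt ((\<eta>/r)\<^sup>2) = \<eta>/r" using eta rpos by simp
    finally have sa: "sqrt a \<le> \<eta>/r" .
    have "r * sqrt a \<le> \<eta>" using sa rpos by (simp add: pos_le_divide_eq mult.commute)
    then have "r * Lnorm Xi p (I.AA k) \<le> \<eta>" unfolding Lnorm_def a_def[symmetric] .
    then show ?thesis unfolding E_def e_def K0_def by (rule I.err_bound[OF lip L])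
  qed
  define q where "q = sqrt (max 0 (1 - \<kappa>/K0))"
  have q0: "0 \<le> q" unfolding q_def by simp
  have q1: "q < 1" unfolding q_def using kpos K0pos by (simp add: real_sqrt_less_iff max_def)
  have step: "sqrt (E (Suc k)) \<le> q * sqrt (E k)" if k: "k \<ge> K" for k
  proof -
    have "E (Suc k) \<le> E k - \<kappa> * e k" by (rule fej)
    also have "\<kappa> * e k \<ge> (\<kappa>/K0) * E k"
    proof -
      have "(\<kappa>/K0) * E k \<le> (\<kappa>/K0) * (K0 * e k)" using Ebound[OF k] kpos K0pos by (intro mult_left_mono) auto
      then show ?thesis using K0pos by simp
    qed
    then have "E k - \<kappa> * e k \<le> (1 - \<kappa>/K0) * E k" by (simp add: algebra_simps)
    also have "\<dots> \<le> max 0 (1 - \<kappa>/K0) * E k" using E_nn[of k] by (intro mult_right_mono) auto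
    finally have "E (Suc k) \<le> max 0 (1 - \<kappa>/K0) * E k" .
    then have "sqrt (E (Suc k)) \<le> sqrt (max 0 (1 - \<kappa>/K0) * E k)" by simp
    then show ?thesis unfolding q_def by (simp add: real_sqrt_mult)
  qed
  have conv: "(\<lambda>k. sqrt (E k)) \<longlonglongrightarrow> 0"
  proof (rule tendsto_sandwich[where f="\<lambda>_. 0" and h="\<lambda>k. sqrt (K0 * e k)"])
    show "eventually (\<lambda>k. 0 \<le> sqrt (E k)) sequentially" using E_nn by simp
    show "eventually (\<lambda>k. sqrt (E k) \<le> sqrt (K0 * e k)) sequentially"
      unfolding eventually_sequentially using Ebound by auto
    show "(\<lambda>_. 0) \<longlonglongrightarrow> (0::real)" by simp
    have "(\<lambda>k. sqrt (K0 * e k)) \<longlonglongrightarrow> sqrt (K0 * 0)" by (intro tendsto_intros elim)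
    then show "(\<lambda>k. sqrt (K0 * e k)) \<longlonglongrightarrow> 0" by simp
  qed
  have "svi_solution Xi p stg F C xs ws \<and>
           ((\<lambda>k. Mr_norm Xi p r (\<lambda>\<xi>. x k \<xi> - xs \<xi>) (\<lambda>\<xi>. w k \<xi> - ws \<xi>)) \<longlonglongrightarrow> 0) \<and>
           (\<exists>q. 0 \<le> q \<and> q < 1 \<and> (\<exists>K. \<forall>k\<ge>K.
              Mr_norm Xi p r (\<lambda>\<xi>. x (Suc k) \<xi> - xs \<xi>) (\<lambda>\<xi>. w (Suc k) \<xi> - ws \<xi>)
              \<le> q * Mr_norm Xi p r (\<lambda>\<xi>. x k \<xi> - xs \<xi>) (\<lambda>\<xi>. w k \<xi> - ws \<xi>)))"
    unfolding Mr using sol conv q0 q1 step by blast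
  then show ?thesis by blast
qed

end
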